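(* Let $M$ be a complex manifold of complex dimension $2k+1$ ($k\ge1$), and let $\omega$ be a singular contact structure on $M$ of the first type with structurally smooth Martinet hypersurface $S$. If a holomorphic vector field $X$ on $M$ is an infinitesimal contact transformation of $\omega$, then the restriction $X|_S$ is a holomorphic vector field tangent to $S$.
   Context: A singular contact form on $M$ is a collection $\{(U_i,\omega_i)\}$ with $\{U_i\}$ an open cover and $\omega_i$ holomorphic $1$-forms on $U_i$ such that $\omega_i\wedge(d\omega_i)^k$ vanishes only on a nowhere dense subset of $U_i$ and $\omega_i=f_{ij}\omega_j$ on overlaps with $f_{ij}$ nowhere vanishing holomorphic; a singular contact structure is the equivalence class of such under multiplication by nowhere vanishing holomorphic functions. The Martinet hypersurface is $S=\{\omega_i\wedge(d\omega_i)^k=0\}$; writing $\omega_i\wedge(d\omega_i)^k=H_i\Omega_i$ with $\Omega_i$ a nowhere vanishing $(2k+1)$-form, $S$ is structurally smooth if $dH_i\neq0$ on $S$. First type means each $\omega_i$ is nowhere vanishing. A holomorphic vector field $X$ is an infinitesimal contact transformation if $\mathcal{L}_X\omega_i=h_i\omega_i$ for holomorphic functions $h_i$. *)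

theory Defs
  imports "HOL-Analysis.Analysis"
begin

definition holo_fun_on :: "(complex^'n) set \<Rightarrow> (complex^'n \<Rightarrow> complex) \<Rightarrow> bool" where
  "holo_fun_on U f \<longleftrightarrow> open U \<and>
     (\<forall>x\<in>U. \<exists>L. (f has_derivative L) (at x) \<and> (\<forall>c v. L (c *s v) = c * L v))"

definition holo_map_on :: "(complex^'n) set \<Rightarrow> (complex^'n \<Rightarrow> complex^'m) \<Rightarrow> bool" where
  "holo_map_on U F \<longleftrightarrow> (\<forall>j. holo_fun_on U (\<lambda>x. F x $ j))"

text \<open>Pairing of a covector (coefficient vector of a 1-form in the basis dz_j) with a vector.\<close>
definition cpair :: "complex^'n \<Rightarrow> complex^'n \<Rightarrow> complex" where
  "cpair a v = (\<Sum>j\<in>UNIV. a $ j * v $ j)"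

type_synonym ('m,'n) chart = "'m set \<times> ('m \<Rightarrow> complex^'n)"

definition holo_atlas :: "('m::topological_space, 'n::finite) chart set \<Rightarrow> bool" where
  "holo_atlas A \<longleftrightarrow>
     (\<forall>(V,\<phi>)\<in>A. open V \<and> open (\<phi> ` V) \<and> (\<exists>\<psi>. homeomorphism V (\<phi> ` V) \<phi> \<psi>)) \<and>
     (\<Union>(V,\<phi>)\<in>A. V) = UNIV \<and>
     (\<forall>(V,\<phi>)\<in>A. \<forall>(W,\<psi>)\<in>A. holo_map_on (\<phi> ` (V \<inter> W)) (\<psi> \<circ> inv_into V \<phi>))"

text \<open>A complex manifold of complex dimension n = CARD('n): the (Hausdorff, second countable)
space 'm with a holomorphic atlas.\<close>
definition complex_manifold :: "('m::{t2_space,second_countable_topology}, 'n::finite) chart set \<Rightarrow> bool" where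
  "complex_manifold A \<longleftrightarrow> holo_atlas A"

definition loc :: "('m, 'n) chart \<Rightarrow> ('m \<Rightarrow> 'b) \<Rightarrow> complex^'n \<Rightarrow> 'b" where
  "loc c g = (\<lambda>x. g (inv_into (fst c) (snd c) x))"

definition trans_deriv :: "('m, 'n) chart \<Rightarrow> ('m, 'n) chart \<Rightarrow> 'm \<Rightarrow> complex^'n \<Rightarrow> complex^'n" where
  "trans_deriv c d p = frechet_derivative (snd d \<circ> inv_into (fst c) (snd c)) (at (snd c p))"

definition mholo_fun :: "('m::topological_space, 'n::finite) chart set \<Rightarrow> 'm set \<Rightarrow> ('m \<Rightarrow> complex) \<Rightarrow> bool" where
  "mholo_fun A U f \<longleftrightarrow> open U \<and>
     (\<forall>c\<in>A. holo_fun_on (snd c ` (U \<inter> fst c)) (loc c f))"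

text \<open>A holomorphic 1-form on the open set U, given by its coefficient vector
w c p (in the basis dz_1..dz_n of the chart c) at each point p of the chart domain;
the coefficients transform covariantly under chart changes.\<close>
definition holo_1form :: "('m::topological_space, 'n::finite) chart set \<Rightarrow> 'm set
     \<Rightarrow> (('m,'n) chart \<Rightarrow> 'm \<Rightarrow> complex^'n) \<Rightarrow> bool" where
  "holo_1form A U w \<longleftrightarrow> open U \<and>
     (\<forall>c\<in>A. holo_map_on (snd c ` (U \<inter> fst c)) (loc c (w c))) \<and>
     (\<forall>c\<in>A. \<forall>d\<in>A. \<forall>p\<in>U \<inter> fst c \<inter> fst d. \<forall>v.
        cpair (w c p) v = cpair (w d p) (trans_deriv c d p v))"

text \<open>A holomorphic vector field on M, given by its components in each chart,
transforming contravariantly under chart changes.\<close>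
definition holo_vfield :: "('m::topological_space, 'n::finite) chart set
     \<Rightarrow> (('m,'n) chart \<Rightarrow> 'm \<Rightarrow> complex^'n) \<Rightarrow> bool" where
  "holo_vfield A X \<longleftrightarrow>
     (\<forall>c\<in>A. holo_map_on (snd c ` fst c) (loc c (X c))) \<and>
     (\<forall>c\<in>A. \<forall>d\<in>A. \<forall>p\<in>fst c \<inter> fst d. X d p = trans_deriv c d p (X c p))"

text \<open>A p-form at a point is a function of a sequence of vectors (only the first p entries
matter).  Wedge product with the standard normalisation 1/(p! q!).\<close>
definition wedge :: "nat \<Rightarrow> nat \<Rightarrow> ((nat \<Rightarrow> 'v) \<Rightarrow> complex) \<Rightarrow> ((nat \<Rightarrow> 'v) \<Rightarrow> complex)
                      \<Rightarrow> (nat \<Rightarrow> 'v) \<Rightarrow> complex" where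
  "wedge p q \<alpha> \<beta> = (\<lambda>v.
     (\<Sum>\<sigma>\<in>{\<sigma>. \<sigma> permutes {..<p+q}}.
        of_int (sign \<sigma>) * \<alpha> (v \<circ> \<sigma>) * \<beta> (\<lambda>i. v (\<sigma> (p + i)))) / (fact p * fact q))"

fun wpow2 :: "((nat \<Rightarrow> 'v) \<Rightarrow> complex) \<Rightarrow> nat \<Rightarrow> (nat \<Rightarrow> 'v) \<Rightarrow> complex" where
  "wpow2 \<beta> 0 = (\<lambda>v. 1)"
| "wpow2 \<beta> (Suc m) = wedge 2 (2*m) \<beta> (wpow2 \<beta> m)"

definition form1 :: "(complex^'n \<Rightarrow> complex^'n) \<Rightarrow> complex^'n \<Rightarrow> (nat \<Rightarrow> complex^'n) \<Rightarrow> complex" where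
  "form1 a x = (\<lambda>v. cpair (a x) (v 0))"

definition dform1 :: "(complex^'n \<Rightarrow> complex^'n) \<Rightarrow> complex^'n \<Rightarrow> (nat \<Rightarrow> complex^'n) \<Rightarrow> complex" where
  "dform1 a x = (\<lambda>v. cpair (frechet_derivative a (at x) (v 0)) (v 1)
                   - cpair (frechet_derivative a (at x) (v 1)) (v 0))"

definition contact_top :: "nat \<Rightarrow> (complex^'n \<Rightarrow> complex^'n) \<Rightarrow> complex^'n \<Rightarrow> (nat \<Rightarrow> complex^'n) \<Rightarrow> complex" where
  "contact_top k a x = wedge 1 (2*k) (form1 a x) (wpow2 (dform1 a x) k)"

text \<open>A fixed ordering of the coordinate index type, giving the coordinate volume form
Omega = dz_1 \<and> ... \<and> dz_n.\<close>
definition coord_order :: "nat \<Rightarrow> 'n::finite" where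
  "coord_order = (SOME f. bij_betw f {..<CARD('n)} UNIV)"

text \<open>The function H with omega \<and> (d omega)^k = H \<cdot> dz_1 \<and> ... \<and> dz_n (when 2k+1 = n).\<close>
definition contact_H :: "nat \<Rightarrow> (complex^'n::finite \<Rightarrow> complex^'n) \<Rightarrow> complex^'n \<Rightarrow> complex" where
  "contact_H k a x = contact_top k a x (\<lambda>i. axis (coord_order i) 1)"

definition Hloc :: "nat \<Rightarrow> (('m,'n::finite) chart \<Rightarrow> 'm \<Rightarrow> complex^'n) \<Rightarrow> ('m,'n) chart \<Rightarrow> complex^'n \<Rightarrow> complex" where
  "Hloc k w c = contact_H k (loc c (w c))"

definition vanishing_set :: "nat \<Rightarrow> ('m, 'n::finite) chart set \<Rightarrow> 'm set
     \<Rightarrow> (('m,'n) chart \<Rightarrow> 'm \<Rightarrow> complex^'n) \<Rightarrow> 'm set" where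
  "vanishing_set k A U w =
     {p\<in>U. \<forall>c\<in>A. p \<in> fst c \<longrightarrow> contact_top k (loc c (w c)) (snd c p) = (\<lambda>v. 0)}"

definition nowhere_dense_in :: "'a::topological_space set \<Rightarrow> 'a set \<Rightarrow> bool" where
  "nowhere_dense_in Z U \<longleftrightarrow> interior (closure Z \<inter> U) = {}"

definition singular_contact_form :: "nat \<Rightarrow> ('m::topological_space, 'n::finite) chart set
     \<Rightarrow> ('i \<Rightarrow> 'm set) \<Rightarrow> ('i \<Rightarrow> ('m,'n) chart \<Rightarrow> 'm \<Rightarrow> complex^'n) \<Rightarrow> bool" where
  "singular_contact_form k A U w \<longleftrightarrow>
     (\<forall>i. open (U i)) \<and> (\<Union>i. U i) = UNIV \<and>
     (\<forall>i. holo_1form A (U i) (w i)) \<and>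
     (\<forall>i. nowhere_dense_in (vanishing_set k A (U i) (w i)) (U i)) \<and>
     (\<forall>i j. \<exists>f. mholo_fun A (U i \<inter> U j) f \<and> (\<forall>p\<in>U i \<inter> U j. f p \<noteq> 0) \<and>
              (\<forall>c\<in>A. \<forall>p\<in>U i \<inter> U j \<inter> fst c. w i c p = f p *s w j c p))"

definition first_type :: "('m, 'n::finite) chart set \<Rightarrow> ('i \<Rightarrow> 'm set)
     \<Rightarrow> ('i \<Rightarrow> ('m,'n) chart \<Rightarrow> 'm \<Rightarrow> complex^'n) \<Rightarrow> bool" where
  "first_type A U w \<longleftrightarrow> (\<forall>i. \<forall>c\<in>A. \<forall>p\<in>U i \<inter> fst c. w i c p \<noteq> 0)"

definition martinet :: "nat \<Rightarrow> ('m, 'n::finite) chart set \<Rightarrow> ('i \<Rightarrow> 'm set)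
     \<Rightarrow> ('i \<Rightarrow> ('m,'n) chart \<Rightarrow> 'm \<Rightarrow> complex^'n) \<Rightarrow> 'm set" where
  "martinet k A U w = (\<Union>i. vanishing_set k A (U i) (w i))"

text \<open>Structurally smooth: dH_i \<noteq> 0 on S (H_i taken w.r.t. the coordinate volume form).\<close>
definition structurally_smooth :: "nat \<Rightarrow> ('m, 'n::finite) chart set \<Rightarrow> ('i \<Rightarrow> 'm set)
     \<Rightarrow> ('i \<Rightarrow> ('m,'n) chart \<Rightarrow> 'm \<Rightarrow> complex^'n) \<Rightarrow> bool" where
  "structurally_smooth k A U w \<longleftrightarrow>
     (\<forall>i. \<forall>c\<in>A. \<forall>p\<in>martinet k A U w \<inter> U i \<inter> fst c.
        frechet_derivative (Hloc k (w i) c) (at (snd c p)) \<noteq> (\<lambda>v. 0))"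

definition lie_1form :: "(complex^'n \<Rightarrow> complex^'n) \<Rightarrow> (complex^'n \<Rightarrow> complex^'n)
     \<Rightarrow> complex^'n \<Rightarrow> complex^'n \<Rightarrow> complex" where
  "lie_1form Y a x v = cpair (frechet_derivative a (at x) (Y x)) v
                      + cpair (a x) (frechet_derivative Y (at x) v)"

definition inf_contact_transf :: "('m::topological_space, 'n::finite) chart set \<Rightarrow> ('i \<Rightarrow> 'm set)
     \<Rightarrow> ('i \<Rightarrow> ('m,'n) chart \<Rightarrow> 'm \<Rightarrow> complex^'n) \<Rightarrow> (('m,'n) chart \<Rightarrow> 'm \<Rightarrow> complex^'n) \<Rightarrow> bool" where
  "inf_contact_transf A U w X \<longleftrightarrow>
     (\<forall>i. \<exists>h. mholo_fun A (U i) h \<and>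
        (\<forall>c\<in>A. \<forall>p\<in>U i \<inter> fst c. \<forall>v.
           lie_1form (loc c (X c)) (loc c (w i c)) (snd c p) v = h p * cpair (w i c p) v))"

definition tangent_to_martinet :: "nat \<Rightarrow> ('m, 'n::finite) chart set \<Rightarrow> ('i \<Rightarrow> 'm set)
     \<Rightarrow> ('i \<Rightarrow> ('m,'n) chart \<Rightarrow> 'm \<Rightarrow> complex^'n) \<Rightarrow> (('m,'n) chart \<Rightarrow> 'm \<Rightarrow> complex^'n) \<Rightarrow> bool" where
  "tangent_to_martinet k A U w X \<longleftrightarrow>
     (\<forall>i. \<forall>c\<in>A. \<forall>p\<in>martinet k A U w \<inter> U i \<inter> fst c.
        frechet_derivative (Hloc k (w i) c) (at (snd c p)) (X c p) = 0)"

end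

theory Submission
  imports Defs "HOL-Complex_Analysis.Complex_Analysis"
begin


definition extp :: "nat \<Rightarrow> (nat \<Rightarrow> nat) \<Rightarrow> nat \<Rightarrow> nat" where
  "extp p \<tau> = (\<lambda>j. if j < p then j else p + \<tau> (j - p))"

lemma extp_id: "extp p (\<lambda>a. a) = (\<lambda>a. a)"
  by (auto simp: extp_def fun_eq_iff)

lemma perm_finite: "\<sigma> permutes {..<n::nat} \<Longrightarrow> permutation \<sigma>"
  by (metis finite_lessThan permutation_permutes)

lemma extp_transpose: "extp p (Transposition.transpose a b \<circ> \<tau>) = Transposition.transpose (p+a) (p+b) \<circ> extp p \<tau>"
  unfolding extp_def fun_eq_iff o_def Transposition.transpose_def by simp

lemma extp_props:
  assumes "\<tau> permutes {..<q}"
  shows "extp p \<tau> permutes {..<p+q} \<and> sign (extp p \<tau>) = sign \<tau>"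
  using assms finite_lessThan
proof (induction rule: permutes_induct)
  case id
  then show ?case using permutes_id[unfolded id_def] sign_id[unfolded id_def] by (simp add: extp_id)
next
  case (swap a b \<tau>)
  have "extp p \<tau> permutes {..<p+q}" using swap by blast
  then have pa: "permutation (extp p \<tau>)" by (rule perm_finite)
  have "\<tau> permutes {..<q}" using swap by blast
  then have pt: "permutation \<tau>" by (rule perm_finite)
  have "Transposition.transpose (p+a) (p+b) \<circ> extp p \<tau> permutes {..<p+q}"
    using swap by (intro permutes_compose permutes_swap_id) auto
  moreover have "sign (Transposition.transpose (p+a) (p+b) \<circ> extp p \<tau>) = sign (Transposition.transpose a b \<circ> \<tau>)"
    using swap pa pt by (simp add: sign_compose permutation_swap_id sign_swap_id)
  ultimately show ?case unfolding extp_transpose by blast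
qed

lemma sum_perm_reindex:
  assumes "\<tau> permutes {..<q}"
  shows "(\<Sum>\<sigma>\<in>{\<sigma>. \<sigma> permutes {..<p+q}}. G (\<sigma> \<circ> extp p \<tau>)) = (\<Sum>\<sigma>\<in>{\<sigma>. \<sigma> permutes {..<p+q}}. G \<sigma>)"
  using sum_permutations_compose_right[OF extp_props[OF assms, THEN conjunct1], of G] by simp

definition wp :: "('v \<Rightarrow> 'v \<Rightarrow> complex) \<Rightarrow> nat \<Rightarrow> (nat \<Rightarrow> 'v) \<Rightarrow> complex" where
  "wp b m v = (\<Sum>\<sigma>\<in>{\<sigma>. \<sigma> permutes {..<2*m}}. of_int (sign \<sigma>) * (\<Prod>i<m. b (v (\<sigma> (2*i))) (v (\<sigma> (2*i+1)))))"

lemma card_perms: "card {\<sigma>. \<sigma> permutes {..<n::nat}} = fact n"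
  by (simp add: card_permutations)

lemma wpow2_formula: "wpow2 (\<lambda>v. b (v 0) (v 1)) m v = wp b m v / 2^m"
proof (induction m arbitrary: v)
  case 0
  then show ?case by (simp add: wp_def permutes_empty)
next
  case (Suc m)
  let ?P = "{\<sigma>. \<sigma> permutes {..<2+2*m}}"
  let ?Q = "{\<tau>. \<tau> permutes {..<2*m}}"
  define G where "G \<rho> = of_int (sign \<rho>) * (\<Prod>i<Suc m. b (v (\<rho> (2*i))) (v (\<rho> (2*i+1))))" for \<rho>
  have key: "of_int (sign \<sigma>) * b (v (\<sigma> 0)) (v (\<sigma> 1)) * (of_int (sign \<tau>) *
        (\<Prod>i<m. b (v (\<sigma> (2 + \<tau> (2*i)))) (v (\<sigma> (2 + \<tau> (2*i+1))))))
       = G (\<sigma> \<circ> extp 2 \<tau>)" if "\<sigma> \<in> ?P" "\<tau> \<in> ?Q" for \<sigma> \<tau>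
  proof -
    have s: "sign (\<sigma> \<circ> extp 2 \<tau>) = sign \<sigma> * sign \<tau>"
    proof -
      have e: "extp 2 \<tau> permutes {..<2+2*m}" "sign (extp 2 \<tau>) = sign \<tau>"
        using that extp_props[of \<tau> "2*m" 2] by auto
      have "\<sigma> permutes {..<2+2*m}" using that by simp
      then show ?thesis using sign_compose[OF perm_finite perm_finite[OF e(1)]] e(2) by simp
    qed
    have "(\<Prod>i<Suc m. b (v ((\<sigma> \<circ> extp 2 \<tau>) (2*i))) (v ((\<sigma> \<circ> extp 2 \<tau>) (2*i+1))))
        = b (v (\<sigma> 0)) (v (\<sigma> 1)) * (\<Prod>i<m. b (v (\<sigma> (2 + \<tau> (2*i)))) (v (\<sigma> (2 + \<tau> (2*i+1)))))"
      by (subst prod.lessThan_Suc_shift) (simp add: extp_def)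
    then show ?thesis unfolding G_def s by simp
  qed
  have "wpow2 (\<lambda>v. b (v 0) (v 1)) (Suc m) v
      = (\<Sum>\<sigma>\<in>?P. of_int (sign \<sigma>) * b (v (\<sigma> 0)) (v (\<sigma> 1)) * wpow2 (\<lambda>v. b (v 0) (v 1)) m (\<lambda>i. v (\<sigma> (2 + i)))) / (fact 2 * fact (2*m))"
    by (simp only: wpow2.simps wedge_def o_def)
  also have "\<dots> = (\<Sum>\<sigma>\<in>?P. of_int (sign \<sigma>) * b (v (\<sigma> 0)) (v (\<sigma> 1)) * (wp b m (\<lambda>i. v (\<sigma> (2 + i))) / 2^m)) / (fact 2 * fact (2*m))"
    by (simp only: Suc.IH)
  also have "(\<Sum>\<sigma>\<in>?P. of_int (sign \<sigma>) * b (v (\<sigma> 0)) (v (\<sigma> 1)) * (wp b m (\<lambda>i. v (\<sigma> (2 + i))) / 2^m))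
      = (\<Sum>\<sigma>\<in>?P. \<Sum>\<tau>\<in>?Q. G (\<sigma> \<circ> extp 2 \<tau>)) / 2^m"
  proof -
    have "(\<Sum>\<sigma>\<in>?P. of_int (sign \<sigma>) * b (v (\<sigma> 0)) (v (\<sigma> 1)) * (wp b m (\<lambda>i. v (\<sigma> (2 + i))) / 2^m))
       = (\<Sum>\<sigma>\<in>?P. (\<Sum>\<tau>\<in>?Q. of_int (sign \<sigma>) * b (v (\<sigma> 0)) (v (\<sigma> 1)) * (of_int (sign \<tau>) *
        (\<Prod>i<m. b (v (\<sigma> (2 + \<tau> (2*i)))) (v (\<sigma> (2 + \<tau> (2*i+1))))))) / 2^m)"
      by (simp only: wp_def sum_distrib_left times_divide_eq_right)
    also have "\<dots> = (\<Sum>\<sigma>\<in>?P. (\<Sum>\<tau>\<in>?Q. G (\<sigma> \<circ> extp 2 \<tau>)) / 2^m)"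
    proof (rule sum.cong[OF refl])
      fix \<sigma> assume s: "\<sigma> \<in> ?P"
      show "(\<Sum>\<tau>\<in>?Q. of_int (sign \<sigma>) * b (v (\<sigma> 0)) (v (\<sigma> 1)) * (of_int (sign \<tau>) *
        (\<Prod>i<m. b (v (\<sigma> (2 + \<tau> (2*i)))) (v (\<sigma> (2 + \<tau> (2*i+1))))))) / 2^m
          = (\<Sum>\<tau>\<in>?Q. G (\<sigma> \<circ> extp 2 \<tau>)) / 2^m"
        by (rule arg_cong[where f="\<lambda>x. x / 2^m"], rule sum.cong[OF refl], rule key[OF s])
    qed
    finally show ?thesis by (simp only: sum_divide_distrib)
  qed
  also have "(\<Sum>\<sigma>\<in>?P. \<Sum>\<tau>\<in>?Q. G (\<sigma> \<circ> extp 2 \<tau>)) = (\<Sum>\<tau>\<in>?Q. \<Sum>\<sigma>\<in>?P. G (\<sigma> \<circ> extp 2 \<tau>))"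
    by (rule sum.swap)
  also have "\<dots> = (\<Sum>\<tau>\<in>?Q. \<Sum>\<sigma>\<in>?P. G \<sigma>)"
  proof (rule sum.cong[OF refl])
    fix \<tau> assume "\<tau> \<in> ?Q"
    then have "\<tau> permutes {..<2*m}" by simp
    from sum_perm_reindex[OF this, of G 2] show "(\<Sum>\<sigma>\<in>?P. G (\<sigma> \<circ> extp 2 \<tau>)) = (\<Sum>\<sigma>\<in>?P. G \<sigma>)" .
  qed
  also have "\<dots> = fact (2*m) * wp b (Suc m) v"
    by (simp add: card_perms G_def wp_def)
  finally have "wpow2 (\<lambda>v. b (v 0) (v 1)) (Suc m) v = (fact (2*m) * wp b (Suc m) v / 2^m) / (fact 2 * fact (2*m))" .
  moreover have "((fact (2*m) * wp b (Suc m) v / 2^m) / (fact 2 * fact (2*m))) = wp b (Suc m) v / 2^(Suc m)"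
    by (simp add: field_simps)
  ultimately show ?case by (simp only:)
qed

definition TG :: "('v \<Rightarrow> complex) \<Rightarrow> (nat \<Rightarrow> 'v \<Rightarrow> 'v \<Rightarrow> complex) \<Rightarrow> nat \<Rightarrow> (nat \<Rightarrow> 'v) \<Rightarrow> complex" where
  "TG w c k v = (\<Sum>\<rho>\<in>{\<rho>. \<rho> permutes {..<2*k+1}}. of_int (sign \<rho>) * w (v (\<rho> 0)) *
       (\<Prod>i<k. c i (v (\<rho> (2*i+1))) (v (\<rho> (2*i+2)))))"

lemma wedge_top_formula:
  "wedge 1 (2*k) (\<lambda>v. w (v 0)) (wpow2 (\<lambda>v. b (v 0) (v 1)) k) v = TG w (\<lambda>_. b) k v / 2^k"
proof -
  let ?P = "{\<sigma>. \<sigma> permutes {..<1+2*k}}"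
  let ?Q = "{\<tau>. \<tau> permutes {..<2*k}}"
  define G where "G \<rho> = of_int (sign \<rho>) * w (v (\<rho> 0)) * (\<Prod>i<k. b (v (\<rho> (2*i+1))) (v (\<rho> (2*i+2))))" for \<rho>
  have key: "of_int (sign \<sigma>) * w (v (\<sigma> 0)) * (of_int (sign \<tau>) *
        (\<Prod>i<k. b (v (\<sigma> (1 + \<tau> (2*i)))) (v (\<sigma> (1 + \<tau> (2*i+1))))))
       = G (\<sigma> \<circ> extp 1 \<tau>)" if "\<sigma> \<in> ?P" "\<tau> \<in> ?Q" for \<sigma> \<tau>
  proof -
    have s: "sign (\<sigma> \<circ> extp 1 \<tau>) = sign \<sigma> * sign \<tau>"
    proof -
      have e: "extp 1 \<tau> permutes {..<1+2*k}" "sign (extp 1 \<tau>) = sign \<tau>"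
        using that extp_props[of \<tau> "2*k" 1] by auto
      have "\<sigma> permutes {..<1+2*k}" using that by simp
      then show ?thesis using sign_compose[OF perm_finite perm_finite[OF e(1)]] e(2) by simp
    qed
    show ?thesis unfolding G_def s by (simp add: extp_def)
  qed
  have "wedge 1 (2*k) (\<lambda>v. w (v 0)) (wpow2 (\<lambda>v. b (v 0) (v 1)) k) v
      = (\<Sum>\<sigma>\<in>?P. of_int (sign \<sigma>) * w (v (\<sigma> 0)) * (wp b k (\<lambda>i. v (\<sigma> (1 + i))) / 2^k)) / (fact 1 * fact (2*k))"
    by (simp only: wedge_def wpow2_formula o_def)
  also have "(\<Sum>\<sigma>\<in>?P. of_int (sign \<sigma>) * w (v (\<sigma> 0)) * (wp b k (\<lambda>i. v (\<sigma> (1 + i))) / 2^k))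
      = (\<Sum>\<sigma>\<in>?P. \<Sum>\<tau>\<in>?Q. G (\<sigma> \<circ> extp 1 \<tau>)) / 2^k"
  proof -
    have "(\<Sum>\<sigma>\<in>?P. of_int (sign \<sigma>) * w (v (\<sigma> 0)) * (wp b k (\<lambda>i. v (\<sigma> (1 + i))) / 2^k))
       = (\<Sum>\<sigma>\<in>?P. (\<Sum>\<tau>\<in>?Q. of_int (sign \<sigma>) * w (v (\<sigma> 0)) * (of_int (sign \<tau>) *
        (\<Prod>i<k. b (v (\<sigma> (1 + \<tau> (2*i)))) (v (\<sigma> (1 + \<tau> (2*i+1))))))) / 2^k)"
      by (simp only: wp_def sum_distrib_left times_divide_eq_right)
    also have "\<dots> = (\<Sum>\<sigma>\<in>?P. (\<Sum>\<tau>\<in>?Q. G (\<sigma> \<circ> extp 1 \<tau>)) / 2^k)"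
    proof (rule sum.cong[OF refl])
      fix \<sigma> assume s: "\<sigma> \<in> ?P"
      show "(\<Sum>\<tau>\<in>?Q. of_int (sign \<sigma>) * w (v (\<sigma> 0)) * (of_int (sign \<tau>) *
        (\<Prod>i<k. b (v (\<sigma> (1 + \<tau> (2*i)))) (v (\<sigma> (1 + \<tau> (2*i+1))))))) / 2^k
          = (\<Sum>\<tau>\<in>?Q. G (\<sigma> \<circ> extp 1 \<tau>)) / 2^k"
        by (rule arg_cong[where f="\<lambda>x. x / 2^k"], rule sum.cong[OF refl], rule key[OF s])
    qed
    finally show ?thesis by (simp only: sum_divide_distrib)
  qed
  also have "(\<Sum>\<sigma>\<in>?P. \<Sum>\<tau>\<in>?Q. G (\<sigma> \<circ> extp 1 \<tau>)) = (\<Sum>\<tau>\<in>?Q. \<Sum>\<sigma>\<in>?P. G (\<sigma> \<circ> extp 1 \<tau>))"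
    by (rule sum.swap)
  also have "\<dots> = (\<Sum>\<tau>\<in>?Q. \<Sum>\<sigma>\<in>?P. G \<sigma>)"
  proof (rule sum.cong[OF refl])
    fix \<tau> assume "\<tau> \<in> ?Q"
    then have "\<tau> permutes {..<2*k}" by simp
    from sum_perm_reindex[OF this, of G 1] show "(\<Sum>\<sigma>\<in>?P. G (\<sigma> \<circ> extp 1 \<tau>)) = (\<Sum>\<sigma>\<in>?P. G \<sigma>)" .
  qed
  also have "\<dots> = fact (2*k) * TG w (\<lambda>_. b) k v"
    by (simp add: card_perms G_def TG_def add.commute)
  finally have "wedge 1 (2*k) (\<lambda>v. w (v 0)) (wpow2 (\<lambda>v. b (v 0) (v 1)) k) v = (fact (2*k) * TG w (\<lambda>_. b) k v / 2^k) / (fact 1 * fact (2*k))" .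
  moreover have "((fact (2*k) * TG w (\<lambda>_. b) k v / 2^k) / (fact 1 * fact (2*k))) = TG w (\<lambda>_. b) k v / 2^k"
    by (simp add: field_simps)
  ultimately show ?thesis by (simp only:)
qed


lemma TG_split:
  assumes "j < k"
  shows "TG w c k v = (\<Sum>\<rho>\<in>{\<rho>. \<rho> permutes {..<2*k+1}}. of_int (sign \<rho>) * w (v (\<rho> 0)) *
       c j (v (\<rho> (2*j+1))) (v (\<rho> (2*j+2))) *
       (\<Prod>i\<in>{..<k}-{j}. c i (v (\<rho> (2*i+1))) (v (\<rho> (2*i+2)))))"
  unfolding TG_def using assms by (simp add: prod.remove[of "{..<k}" j] mult.assoc)

lemma sign_comp_transpose:
  assumes "\<rho> permutes {..<n::nat}" "a \<noteq> b"
  shows "sign (\<rho> \<circ> Transposition.transpose a b) = - sign \<rho>"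
  using assms by (simp add: sign_compose perm_finite permutation_swap_id sign_swap_id)

lemma TG_zero1:
  assumes "j < k" "c j = (\<lambda>x y. g x * w y)"
  shows "TG w c k v = 0"
proof -
  let ?P = "{\<rho>. \<rho> permutes {..<2*k+1}}"
  let ?t = "Transposition.transpose 0 (2*j+2)"
  define R where "R \<rho> = (\<Prod>i\<in>{..<k}-{j}. c i (v (\<rho> (2*i+1))) (v (\<rho> (2*i+2))))" for \<rho>
  define T where "T \<rho> = of_int (sign \<rho>) * w (v (\<rho> 0)) * c j (v (\<rho> (2*j+1))) (v (\<rho> (2*j+2))) * R \<rho>" for \<rho>
  have TG: "TG w c k v = sum T ?P" unfolding T_def R_def using TG_split[OF assms(1)] by simp
  have tp: "?t permutes {..<2*k+1}" using assms by (intro permutes_swap_id) auto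
  have Rt: "R (\<rho> \<circ> ?t) = R \<rho>" for \<rho>
    unfolding R_def by (intro prod.cong refl) (auto simp: Transposition.transpose_def)
  have neg: "T (\<rho> \<circ> ?t) = - T \<rho>" if "\<rho> \<in> ?P" for \<rho>
  proof -
    have s: "sign (\<rho> \<circ> ?t) = - sign \<rho>" using that sign_comp_transpose[of \<rho> "2*k+1" 0 "2*j+2"] by simp
    have "T (\<rho> \<circ> ?t) = - of_int (sign \<rho>) * w (v (\<rho> (2*j+2))) * (g (v (\<rho> (2*j+1))) * w (v (\<rho> 0))) * R \<rho>"
      unfolding T_def Rt s assms(2) by (simp add: Transposition.transpose_def)
    also have "\<dots> = - T \<rho>" unfolding T_def assms(2) by (simp add: algebra_simps)
    finally show ?thesis .
  qed
  have "sum T ?P = sum (\<lambda>\<rho>. T (\<rho> \<circ> ?t)) ?P" by (rule sum_permutations_compose_right[OF tp])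
  also have "\<dots> = sum (\<lambda>\<rho>. - T \<rho>) ?P" by (intro sum.cong refl neg) auto
  also have "\<dots> = - sum T ?P" by (simp add: sum_negf)
  finally have "sum T ?P = 0" by simp
  then show ?thesis using TG by simp
qed

lemma TG_zero2:
  assumes "j < k" "c j = (\<lambda>x y. w x * g y)"
  shows "TG w c k v = 0"
proof -
  let ?P = "{\<rho>. \<rho> permutes {..<2*k+1}}"
  let ?t = "Transposition.transpose 0 (2*j+1)"
  define R where "R \<rho> = (\<Prod>i\<in>{..<k}-{j}. c i (v (\<rho> (2*i+1))) (v (\<rho> (2*i+2))))" for \<rho>
  define T where "T \<rho> = of_int (sign \<rho>) * w (v (\<rho> 0)) * c j (v (\<rho> (2*j+1))) (v (\<rho> (2*j+2))) * R \<rho>" for \<rho>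
  have TG: "TG w c k v = sum T ?P" unfolding T_def R_def using TG_split[OF assms(1)] by simp
  have tp: "?t permutes {..<2*k+1}" using assms by (intro permutes_swap_id) auto
  have Rt: "R (\<rho> \<circ> ?t) = R \<rho>" for \<rho>
    unfolding R_def by (intro prod.cong refl) (auto simp: Transposition.transpose_def)
  have neg: "T (\<rho> \<circ> ?t) = - T \<rho>" if "\<rho> \<in> ?P" for \<rho>
  proof -
    have s: "sign (\<rho> \<circ> ?t) = - sign \<rho>" using that sign_comp_transpose[of \<rho> "2*k+1" 0 "2*j+1"] by simp
    have "T (\<rho> \<circ> ?t) = - of_int (sign \<rho>) * w (v (\<rho> (2*j+1))) * (w (v (\<rho> 0)) * g (v (\<rho> (2*j+2)))) * R \<rho>"
      unfolding T_def Rt s assms(2) by (simp add: Transposition.transpose_def)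
    also have "\<dots> = - T \<rho>" unfolding T_def assms(2) by (simp add: algebra_simps)
    finally show ?thesis .
  qed
  have "sum T ?P = sum (\<lambda>\<rho>. T (\<rho> \<circ> ?t)) ?P" by (rule sum_permutations_compose_right[OF tp])
  also have "\<dots> = sum (\<lambda>\<rho>. - T \<rho>) ?P" by (intro sum.cong refl neg) auto
  also have "\<dots> = - sum T ?P" by (simp add: sum_negf)
  finally have "sum T ?P = 0" by simp
  then show ?thesis using TG by simp
qed

lemma TG_slot_lin:
  assumes "j < k"
  shows "TG w (c(j := (\<lambda>x y. r * c1 x y + c2 x y))) k v = r * TG w (c(j := c1)) k v + TG w (c(j := c2)) k v"
proof -
  have R: "(\<Prod>i\<in>{..<k}-{j}. (c(j:=d)) i (v (\<rho> (2*i+1))) (v (\<rho> (2*i+2))))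
        = (\<Prod>i\<in>{..<k}-{j}. c i (v (\<rho> (2*i+1))) (v (\<rho> (2*i+2))))" for d \<rho>
    by (intro prod.cong refl) auto
  show ?thesis
    unfolding TG_split[OF assms] R
    by (simp add: sum_distrib_left algebra_simps sum.distrib)
qed

lemma TG_slot_zero:
  assumes "j < k"
  shows "TG w (c(j := (\<lambda>x y. 0))) k v = 0"
  unfolding TG_split[OF assms] by simp

lemma TG_w_lin:
  "TG (\<lambda>x. r * w1 x + w2 x) c k v = r * TG w1 c k v + TG w2 c k v"
  unfolding TG_def by (simp add: sum_distrib_left algebra_simps sum.distrib)

lemma TG_natural:
  "TG (\<lambda>z. w (G z)) (\<lambda>i z z'. c i (G z) (G z')) k v = TG w c k (\<lambda>i. G (v i))"
  by (simp add: TG_def)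


lemma TG_has_derivative:
  fixes W :: "'p::real_normed_vector \<Rightarrow> 'v \<Rightarrow> complex" and B :: "'p \<Rightarrow> 'v \<Rightarrow> 'v \<Rightarrow> complex"
  assumes dW: "\<And>z. ((\<lambda>t. W t z) has_derivative W' z) (at t0)"
    and dB: "\<And>z z'. ((\<lambda>t. B t z z') has_derivative B' z z') (at t0)"
  shows "((\<lambda>t. TG (W t) (\<lambda>_. B t) k v) has_derivative
     (\<lambda>s. TG (\<lambda>z. W' z s) (\<lambda>_. B t0) k v + (\<Sum>m<k. TG (W t0) ((\<lambda>_. B t0)(m := (\<lambda>z z'. B' z z' s))) k v))) (at t0)"
proof -
  let ?P = "{\<rho>. \<rho> permutes {..<2*k+1}}"
  define G where "G \<rho> s = of_int (sign \<rho>) * (W' (v (\<rho> 0)) s * (\<Prod>i<k. B t0 (v (\<rho> (2*i+1))) (v (\<rho> (2*i+2))))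
      + W t0 (v (\<rho> 0)) * (\<Sum>m<k. B' (v (\<rho> (2*m+1))) (v (\<rho> (2*m+2))) s *
          (\<Prod>i\<in>{..<k}-{m}. B t0 (v (\<rho> (2*i+1))) (v (\<rho> (2*i+2))))))" for \<rho> s
  have each: "((\<lambda>t. of_int (sign \<rho>) * W t (v (\<rho> 0)) * (\<Prod>i<k. B t (v (\<rho> (2*i+1))) (v (\<rho> (2*i+2)))))
      has_derivative G \<rho>) (at t0)" for \<rho>
  proof -
    have p: "((\<lambda>t. \<Prod>i<k. B t (v (\<rho> (2*i+1))) (v (\<rho> (2*i+2)))) has_derivative
       (\<lambda>s. \<Sum>m<k. B' (v (\<rho> (2*m+1))) (v (\<rho> (2*m+2))) s *
          (\<Prod>i\<in>{..<k}-{m}. B t0 (v (\<rho> (2*i+1))) (v (\<rho> (2*i+2)))))) (at t0)"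
      by (rule has_derivative_prod) (rule dB)
    have "((\<lambda>t. of_int (sign \<rho>) * W t (v (\<rho> 0)) * (\<Prod>i<k. B t (v (\<rho> (2*i+1))) (v (\<rho> (2*i+2)))))
      has_derivative (\<lambda>s. (of_int (sign \<rho>) * W t0 (v (\<rho> 0))) * (\<Sum>m<k. B' (v (\<rho> (2*m+1))) (v (\<rho> (2*m+2))) s *
          (\<Prod>i\<in>{..<k}-{m}. B t0 (v (\<rho> (2*i+1))) (v (\<rho> (2*i+2))))) +
         (of_int (sign \<rho>) * W' (v (\<rho> 0)) s) * (\<Prod>i<k. B t0 (v (\<rho> (2*i+1))) (v (\<rho> (2*i+2)))))) (at t0)"
      by (intro has_derivative_mult p has_derivative_mult_right dW)
    moreover have "(\<lambda>s. (of_int (sign \<rho>) * W t0 (v (\<rho> 0))) * (\<Sum>m<k. B' (v (\<rho> (2*m+1))) (v (\<rho> (2*m+2))) s *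
          (\<Prod>i\<in>{..<k}-{m}. B t0 (v (\<rho> (2*i+1))) (v (\<rho> (2*i+2))))) +
         (of_int (sign \<rho>) * W' (v (\<rho> 0)) s) * (\<Prod>i<k. B t0 (v (\<rho> (2*i+1))) (v (\<rho> (2*i+2))))) = G \<rho>"
      by (rule ext) (simp add: G_def algebra_simps)
    ultimately show ?thesis by simp
  qed
  have "((\<lambda>t. TG (W t) (\<lambda>_. B t) k v) has_derivative (\<lambda>s. \<Sum>\<rho>\<in>?P. G \<rho> s)) (at t0)"
    unfolding TG_def by (rule has_derivative_sum) (rule each)
  moreover have "(\<lambda>s. \<Sum>\<rho>\<in>?P. G \<rho> s) = (\<lambda>s. TG (\<lambda>z. W' z s) (\<lambda>_. B t0) k v + (\<Sum>m<k. TG (W t0) ((\<lambda>_. B t0)(m := (\<lambda>z z'. B' z z' s))) k v))"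
  proof (rule ext)
    fix s
    have R: "(\<Prod>i\<in>{..<k}-{m}. ((\<lambda>_. B t0)(m:=d)) i (v (\<rho> (2*i+1))) (v (\<rho> (2*i+2))))
        = (\<Prod>i\<in>{..<k}-{m}. B t0 (v (\<rho> (2*i+1))) (v (\<rho> (2*i+2))))" for d \<rho> m
      by (intro prod.cong refl) auto
    have "(\<Sum>m<k. TG (W t0) ((\<lambda>_. B t0)(m := (\<lambda>z z'. B' z z' s))) k v)
       = (\<Sum>m<k. \<Sum>\<rho>\<in>?P. of_int (sign \<rho>) * W t0 (v (\<rho> 0)) * B' (v (\<rho> (2*m+1))) (v (\<rho> (2*m+2))) s *
          (\<Prod>i\<in>{..<k}-{m}. B t0 (v (\<rho> (2*i+1))) (v (\<rho> (2*i+2)))))"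
      by (intro sum.cong refl) (simp add: TG_split R)
    also have "\<dots> = (\<Sum>\<rho>\<in>?P. \<Sum>m<k. of_int (sign \<rho>) * W t0 (v (\<rho> 0)) * B' (v (\<rho> (2*m+1))) (v (\<rho> (2*m+2))) s *
          (\<Prod>i\<in>{..<k}-{m}. B t0 (v (\<rho> (2*i+1))) (v (\<rho> (2*i+2)))))"
      by (rule sum.swap)
    finally show "(\<Sum>\<rho>\<in>?P. G \<rho> s) = TG (\<lambda>z. W' z s) (\<lambda>_. B t0) k v + (\<Sum>m<k. TG (W t0) ((\<lambda>_. B t0)(m := (\<lambda>z z'. B' z z' s))) k v)"
      by (simp add: G_def TG_def sum.distrib sum_distrib_left algebra_simps)
  qed
  ultimately show ?thesis by simp
qed

lemma TG_natural_deriv: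
  fixes w :: "complex^'n \<Rightarrow> complex" and b :: "complex^'n \<Rightarrow> complex^'n \<Rightarrow> complex"
  assumes wl: "\<And>z z' c. w (z + c *s z') = w z + c * w z'"
    and bl1: "\<And>z z' y c. b (z + c *s z') y = b z y + c * b z' y"
    and bl2: "\<And>z y y' c. b z (y + c *s y') = b z y + c * b z y'"
    and zero: "\<And>v. TG w (\<lambda>_. b) k v = 0"
  shows "TG (\<lambda>z. w (K z)) (\<lambda>_. b) k v + (\<Sum>m<k. TG w ((\<lambda>_. b)(m := \<lambda>z z'. b (K z) z' + b z (K z'))) k v) = 0"
proof -
  define W where "W \<epsilon> z = w (z + \<epsilon> *s K z)" for \<epsilon> :: complex and z
  define B where "B \<epsilon> z z' = b (z + \<epsilon> *s K z) (z' + \<epsilon> *s K z')" for \<epsilon> :: complex and z z'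
  have dW: "((\<lambda>\<epsilon>. W \<epsilon> z) has_derivative (\<lambda>s. s * w (K z))) (at 0)" for z
  proof -
    have "(\<lambda>\<epsilon>. W \<epsilon> z) = (\<lambda>\<epsilon>. w z + \<epsilon> * w (K z))" by (rule ext) (simp add: W_def wl)
    moreover have "((\<lambda>\<epsilon>. w z + \<epsilon> * w (K z)) has_derivative (\<lambda>s. s * w (K z))) (at 0)"
      by (auto intro!: derivative_eq_intros)
    ultimately show ?thesis by simp
  qed
  have dB: "((\<lambda>\<epsilon>. B \<epsilon> z z') has_derivative (\<lambda>s. s * (b (K z) z' + b z (K z')))) (at 0)" for z z'
  proof -
    have "(\<lambda>\<epsilon>. B \<epsilon> z z') = (\<lambda>\<epsilon>. b z z' + \<epsilon> * (b (K z) z' + b z (K z')) + \<epsilon> * \<epsilon> * b (K z) (K z'))"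
      by (rule ext) (simp add: B_def bl1 bl2 algebra_simps)
    moreover have "((\<lambda>\<epsilon>. b z z' + \<epsilon> * (b (K z) z' + b z (K z')) + \<epsilon> * \<epsilon> * b (K z) (K z')) has_derivative
        (\<lambda>s. s * (b (K z) z' + b z (K z')))) (at 0)"
      by (auto intro!: derivative_eq_intros)
    ultimately show ?thesis by simp
  qed
  have D: "((\<lambda>\<epsilon>. TG (W \<epsilon>) (\<lambda>_. B \<epsilon>) k v) has_derivative
     (\<lambda>s. TG (\<lambda>z. s * w (K z)) (\<lambda>_. B 0) k v + (\<Sum>m<k. TG (W 0) ((\<lambda>_. B 0)(m := (\<lambda>z z'. s * (b (K z) z' + b z (K z'))))) k v))) (at 0)"
    by (rule TG_has_derivative[OF dW dB])
  have W0: "W 0 = w" and B0: "B 0 = b" by (auto simp: W_def B_def fun_eq_iff)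
  have const: "TG (W \<epsilon>) (\<lambda>_. B \<epsilon>) k v = 0" for \<epsilon>
    using TG_natural[of w "\<lambda>z. z + \<epsilon> *s K z" "\<lambda>_. b" k v] zero unfolding W_def B_def by simp
  have D0: "((\<lambda>\<epsilon>. TG (W \<epsilon>) (\<lambda>_. B \<epsilon>) k v) has_derivative (\<lambda>s. 0)) (at 0)"
    unfolding const by simp
  have "(\<lambda>s. TG (\<lambda>z. s * w (K z)) (\<lambda>_. B 0) k v + (\<Sum>m<k. TG (W 0) ((\<lambda>_. B 0)(m := (\<lambda>z z'. s * (b (K z) z' + b z (K z'))))) k v)) = (\<lambda>s. 0)"
    by (rule has_derivative_unique[OF D D0])
  from fun_cong[OF this, of 1] show ?thesis unfolding W0 B0 by simp
qed


lemma schwarz_aux: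
  fixes g :: "'a::real_normed_vector \<Rightarrow> complex"
  assumes r: "r > 0" and dg: "\<And>y. y \<in> ball x r \<Longrightarrow> (g has_derivative Dg y) (at y)"
    and d2s: "((\<lambda>y. Dg y s) has_derivative D2s) (at x)" and ep: "\<epsilon> > 0"
  shows "\<exists>\<delta>>0. \<forall>t. 0 < t \<and> t < \<delta> \<longrightarrow>
     norm (g (x + t *\<^sub>R s + t *\<^sub>R u) - g (x + t *\<^sub>R s) - g (x + t *\<^sub>R u) + g x - (t^2) *\<^sub>R D2s u) \<le> \<epsilon> * t^2"
proof -
  define C where "C = norm s + norm u"
  have C0: "C \<ge> 0" by (simp add: C_def)
  define e where "e = \<epsilon> / (2*C + 1)"
  have e: "e > 0" using ep C0 by (simp add: e_def)
  have eC: "2 * e * C \<le> \<epsilon>"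
  proof -
    have "2 * e * C = \<epsilon> * (2*C / (2*C+1))" by (simp add: e_def field_simps)
    also have "\<dots> \<le> \<epsilon> * 1" using ep C0 by (intro mult_left_mono) auto
    finally show ?thesis by simp
  qed
  obtain d where d: "d > 0" "\<And>y. norm (y - x) < d \<Longrightarrow> norm (Dg y s - Dg x s - D2s (y - x)) \<le> e * norm (y - x)"
    using d2s e unfolding has_derivative_at_alt by blast
  have lin: "linear D2s" using d2s has_derivative_bounded_linear bounded_linear.linear by blast
  define \<delta> where "\<delta> = min r d / (C + 1)"
  show ?thesis
  proof (intro exI[of _ \<delta>] conjI allI impI)
    show "\<delta> > 0" using r d C0 by (simp add: \<delta>_def)
    fix t :: real assume t: "0 < t \<and> t < \<delta>"
    have tC: "t * C < min r d"
    proof -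
      have "t * C \<le> t * (C + 1)" using t by simp
      also have "\<dots> < \<delta> * (C + 1)" using t C0 by (intro mult_strict_right_mono) auto
      also have "\<dots> = min r d" using C0 by (simp add: \<delta>_def)
      finally show ?thesis .
    qed
    define z1 where "z1 \<sigma> = x + \<sigma> *\<^sub>R s + t *\<^sub>R u" for \<sigma>
    define z2 where "z2 \<sigma> = x + \<sigma> *\<^sub>R s" for \<sigma>
    define \<psi> where "\<psi> \<sigma> = g (z1 \<sigma>) - g (z2 \<sigma>) - (\<sigma> * t) *\<^sub>R D2s u" for \<sigma>
    have nz: "norm (z1 \<sigma> - x) \<le> t * C \<and> norm (z2 \<sigma> - x) \<le> t * C" if "0 \<le> \<sigma>" "\<sigma> \<le> t" for \<sigma>
    proof -
      have e1: "z1 \<sigma> - x = \<sigma> *\<^sub>R s + t *\<^sub>R u" by (simp add: z1_def)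
      have "norm (z1 \<sigma> - x) \<le> norm (\<sigma> *\<^sub>R s) + norm (t *\<^sub>R u)"
        unfolding e1 by (rule norm_triangle_ineq)
      also have "\<dots> \<le> t * norm s + t * norm u" using that t
        by (intro add_mono) (auto intro: mult_right_mono)
      finally have 1: "norm (z1 \<sigma> - x) \<le> t * C" by (simp add: C_def distrib_left)
      have "norm (z2 \<sigma> - x) \<le> t * norm s" using that by (simp add: z2_def mult_right_mono)
      also have "\<dots> \<le> t * C" using t by (simp add: C_def)
      finally show ?thesis using 1 by simp
    qed
    have inb: "z1 \<sigma> \<in> ball x r \<and> z2 \<sigma> \<in> ball x r" if "0 \<le> \<sigma>" "\<sigma> \<le> t" for \<sigma>
      using nz[OF that] tC by (auto simp: dist_norm norm_minus_commute)
    have deriv: "(\<psi> has_derivative (\<lambda>h. h *\<^sub>R (Dg (z1 \<sigma>) s - Dg (z2 \<sigma>) s - t *\<^sub>R D2s u))) (at \<sigma>)"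
      if "0 \<le> \<sigma>" "\<sigma> \<le> t" for \<sigma>
    proof -
      have l1: "linear (Dg (z1 \<sigma>))" using dg inb[OF that] has_derivative_bounded_linear bounded_linear.linear by blast
      have l2: "linear (Dg (z2 \<sigma>))" using dg inb[OF that] has_derivative_bounded_linear bounded_linear.linear by blast
      have a1: "((\<lambda>\<sigma>. z1 \<sigma>) has_derivative (\<lambda>h. h *\<^sub>R s)) (at \<sigma>)" unfolding z1_def
        by (auto intro!: derivative_eq_intros)
      have a2: "((\<lambda>\<sigma>. z2 \<sigma>) has_derivative (\<lambda>h. h *\<^sub>R s)) (at \<sigma>)" unfolding z2_def
        by (auto intro!: derivative_eq_intros)
      have b1: "((\<lambda>\<sigma>. g (z1 \<sigma>)) has_derivative (\<lambda>h. Dg (z1 \<sigma>) (h *\<^sub>R s))) (at \<sigma>)"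
        using has_derivative_compose[OF a1 dg[OF inb[OF that, THEN conjunct1]]] by (simp add: o_def)
      have b2: "((\<lambda>\<sigma>. g (z2 \<sigma>)) has_derivative (\<lambda>h. Dg (z2 \<sigma>) (h *\<^sub>R s))) (at \<sigma>)"
        using has_derivative_compose[OF a2 dg[OF inb[OF that, THEN conjunct2]]] by (simp add: o_def)
      have b3: "((\<lambda>\<sigma>. (\<sigma> * t) *\<^sub>R D2s u) has_derivative (\<lambda>h. (h * t) *\<^sub>R D2s u)) (at \<sigma>)"
        by (auto intro!: derivative_eq_intros)
      have "(\<psi> has_derivative (\<lambda>h. Dg (z1 \<sigma>) (h *\<^sub>R s) - Dg (z2 \<sigma>) (h *\<^sub>R s) - (h * t) *\<^sub>R D2s u)) (at \<sigma>)"
        unfolding \<psi>_def by (intro has_derivative_diff b1 b2 b3)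
      moreover have "(\<lambda>h. Dg (z1 \<sigma>) (h *\<^sub>R s) - Dg (z2 \<sigma>) (h *\<^sub>R s) - (h * t) *\<^sub>R D2s u)
          = (\<lambda>h. h *\<^sub>R (Dg (z1 \<sigma>) s - Dg (z2 \<sigma>) s - t *\<^sub>R D2s u))"
        using l1 l2 by (auto simp: linear_scale scaleR_diff_right fun_eq_iff)
      ultimately show ?thesis by simp
    qed
    have bound: "norm (Dg (z1 \<sigma>) s - Dg (z2 \<sigma>) s - t *\<^sub>R D2s u) \<le> 2 * e * t * C" if "0 \<le> \<sigma>" "\<sigma> \<le> t" for \<sigma>
    proof -
      have "D2s (z1 \<sigma> - x) - D2s (z2 \<sigma> - x) = t *\<^sub>R D2s u"
        using lin by (simp add: z1_def z2_def linear_scale linear_add)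
      then have eq: "Dg (z1 \<sigma>) s - Dg (z2 \<sigma>) s - t *\<^sub>R D2s u
         = (Dg (z1 \<sigma>) s - Dg x s - D2s (z1 \<sigma> - x)) - (Dg (z2 \<sigma>) s - Dg x s - D2s (z2 \<sigma> - x))"
        by (simp add: algebra_simps)
      have dd1: "norm (z1 \<sigma> - x) < d" using nz[OF that] tC by simp
      have dd2: "norm (z2 \<sigma> - x) < d" using nz[OF that] tC by simp
      have "norm (Dg (z1 \<sigma>) s - Dg x s - D2s (z1 \<sigma> - x)) \<le> e * norm (z1 \<sigma> - x)" by (rule d(2)[OF dd1])
      also have "\<dots> \<le> e * (t * C)" using nz[OF that] e by (intro mult_left_mono) auto
      finally have n1: "norm (Dg (z1 \<sigma>) s - Dg x s - D2s (z1 \<sigma> - x)) \<le> e * (t * C)" .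
      have "norm (Dg (z2 \<sigma>) s - Dg x s - D2s (z2 \<sigma> - x)) \<le> e * norm (z2 \<sigma> - x)" by (rule d(2)[OF dd2])
      also have "\<dots> \<le> e * (t * C)" using nz[OF that] e by (intro mult_left_mono) auto
      finally have n2: "norm (Dg (z2 \<sigma>) s - Dg x s - D2s (z2 \<sigma> - x)) \<le> e * (t * C)" .
      have "norm (Dg (z1 \<sigma>) s - Dg (z2 \<sigma>) s - t *\<^sub>R D2s u) \<le>
          norm (Dg (z1 \<sigma>) s - Dg x s - D2s (z1 \<sigma> - x)) + norm (Dg (z2 \<sigma>) s - Dg x s - D2s (z2 \<sigma> - x))"
        unfolding eq by (rule norm_triangle_ineq4)
      then have "norm (Dg (z1 \<sigma>) s - Dg (z2 \<sigma>) s - t *\<^sub>R D2s u) \<le> e * (t * C) + e * (t * C)"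
        using n1 n2 by linarith
      then show ?thesis by (simp add: algebra_simps)
    qed
    have cont: "continuous_on {0..t} \<psi>"
      by (rule continuous_at_imp_continuous_on) (metis atLeastAtMost_iff deriv has_derivative_continuous)
    have "\<exists>\<xi>\<in>{0<..<t}. norm (\<psi> t - \<psi> 0) \<le> norm ((\<lambda>h. h *\<^sub>R (Dg (z1 \<xi>) s - Dg (z2 \<xi>) s - t *\<^sub>R D2s u)) (t - 0))"
    proof (rule mvt_general[OF _ cont])
      show "0 < t" using t by simp
      fix \<sigma> assume "0 < \<sigma>" "\<sigma> < t"
      then show "(\<psi> has_derivative (\<lambda>h. h *\<^sub>R (Dg (z1 \<sigma>) s - Dg (z2 \<sigma>) s - t *\<^sub>R D2s u))) (at \<sigma>)"
        by (intro deriv) auto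
    qed
    then obtain \<xi> where \<xi>: "\<xi> \<in> {0<..<t}"
      and mv: "norm (\<psi> t - \<psi> 0) \<le> norm (t *\<^sub>R (Dg (z1 \<xi>) s - Dg (z2 \<xi>) s - t *\<^sub>R D2s u))"
      by auto
    have "norm (t *\<^sub>R (Dg (z1 \<xi>) s - Dg (z2 \<xi>) s - t *\<^sub>R D2s u)) = t * norm (Dg (z1 \<xi>) s - Dg (z2 \<xi>) s - t *\<^sub>R D2s u)"
      using t by simp
    also have "\<dots> \<le> t * (2 * e * t * C)" using bound[of \<xi>] \<xi> t by (intro mult_left_mono) auto
    finally have "norm (\<psi> t - \<psi> 0) \<le> t * (2 * e * t * C)" using mv by linarith
    also have "\<dots> = t^2 * (2 * e * C)" by (simp add: power2_eq_square)
    also have "\<dots> \<le> t^2 * \<epsilon>" using eC by (intro mult_left_mono) auto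
    finally have fin: "norm (\<psi> t - \<psi> 0) \<le> \<epsilon> * t^2" by (simp add: mult.commute)
    have "\<psi> t - \<psi> 0 = g (x + t *\<^sub>R s + t *\<^sub>R u) - g (x + t *\<^sub>R s) - g (x + t *\<^sub>R u) + g x - (t^2) *\<^sub>R D2s u"
      by (simp add: \<psi>_def z1_def z2_def power2_eq_square)
    then show "norm (g (x + t *\<^sub>R s + t *\<^sub>R u) - g (x + t *\<^sub>R s) - g (x + t *\<^sub>R u) + g x - (t^2) *\<^sub>R D2s u) \<le> \<epsilon> * t^2"
      using fin by simp
  qed
qed

lemma schwarz:
  fixes g :: "'a::real_normed_vector \<Rightarrow> complex"
  assumes r: "r > 0" and dg: "\<And>y. y \<in> ball x r \<Longrightarrow> (g has_derivative Dg y) (at y)"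
    and d2s: "((\<lambda>y. Dg y s) has_derivative D2s) (at x)"
    and d2u: "((\<lambda>y. Dg y u) has_derivative D2u) (at x)"
  shows "D2s u = D2u s"
proof (rule ccontr)
  assume ne: "D2s u \<noteq> D2u s"
  define \<epsilon> where "\<epsilon> = norm (D2s u - D2u s) / 4"
  have ep: "\<epsilon> > 0" using ne by (simp add: \<epsilon>_def)
  obtain \<delta>1 where d1: "\<delta>1 > 0" "\<And>t. 0 < t \<and> t < \<delta>1 \<Longrightarrow>
     norm (g (x + t *\<^sub>R s + t *\<^sub>R u) - g (x + t *\<^sub>R s) - g (x + t *\<^sub>R u) + g x - (t^2) *\<^sub>R D2s u) \<le> \<epsilon> * t^2"
    using schwarz_aux[OF r dg d2s ep, of u] by blast
  obtain \<delta>2 where d2: "\<delta>2 > 0" "\<And>t. 0 < t \<and> t < \<delta>2 \<Longrightarrow>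
     norm (g (x + t *\<^sub>R u + t *\<^sub>R s) - g (x + t *\<^sub>R u) - g (x + t *\<^sub>R s) + g x - (t^2) *\<^sub>R D2u s) \<le> \<epsilon> * t^2"
    using schwarz_aux[OF r dg d2u ep, of s] by blast
  define t where "t = min \<delta>1 \<delta>2 / 2"
  have t: "0 < t" "t < \<delta>1" "t < \<delta>2" using d1 d2 by (auto simp: t_def)
  define A where "A = g (x + t *\<^sub>R s + t *\<^sub>R u) - g (x + t *\<^sub>R s) - g (x + t *\<^sub>R u) + g x"
  have A2: "g (x + t *\<^sub>R u + t *\<^sub>R s) - g (x + t *\<^sub>R u) - g (x + t *\<^sub>R s) + g x = A"
    unfolding A_def by (simp add: add_ac)
  have n1: "norm (A - (t^2) *\<^sub>R D2s u) \<le> \<epsilon> * t^2" using d1(2)[of t] t unfolding A_def by simp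
  have n2: "norm (A - (t^2) *\<^sub>R D2u s) \<le> \<epsilon> * t^2" using d2(2)[of t] t A2 by simp
  have "(t^2) *\<^sub>R (D2s u - D2u s) = (A - (t^2) *\<^sub>R D2u s) - (A - (t^2) *\<^sub>R D2s u)"
    by (simp add: algebra_simps)
  then have "norm ((t^2) *\<^sub>R (D2s u - D2u s)) \<le> norm (A - (t^2) *\<^sub>R D2u s) + norm (A - (t^2) *\<^sub>R D2s u)"
    by (metis norm_triangle_ineq4)
  also have "\<dots> \<le> 2 * \<epsilon> * t^2" using n1 n2 by simp
  finally have "t^2 * (4 * \<epsilon>) \<le> 2 * \<epsilon> * t^2" by (simp add: \<epsilon>_def)
  then show False using t ep by (simp add: field_simps)
qed


lemma norm_smult_vec: "norm (c *s (v::complex^'n)) = norm c * norm v"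
  by (simp add: norm_vec_def L2_set_right_distrib norm_mult)

lemma bl_smult: "bounded_linear (\<lambda>t::complex. t *s (u::complex^'n))"
proof (rule bounded_linear_intro[where K="norm u"])
  show "(x + y) *s u = x *s u + y *s u" for x y by (simp add: vec_eq_iff algebra_simps)
  show "(r *\<^sub>R x) *s u = r *\<^sub>R (x *s u)" for r x
    unfolding vec_eq_iff by simp
  show "norm (x *s u) \<le> norm x * norm u" for x by (simp add: norm_smult_vec)
qed

lemma holo_fun_on_deriv:
  assumes "holo_fun_on Q f" "y \<in> Q"
  shows "(f has_derivative frechet_derivative f (at y)) (at y)"
    and "\<And>c v. frechet_derivative f (at y) (c *s v) = c * frechet_derivative f (at y) v"
proof -
  obtain L where L: "(f has_derivative L) (at y)" "\<And>c v. L (c *s v) = c * L v"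
    using assms unfolding holo_fun_on_def by blast
  have "L = frechet_derivative f (at y)" using L(1) by (rule frechet_derivative_at)
  then show "(f has_derivative frechet_derivative f (at y)) (at y)"
    and "\<And>c v. frechet_derivative f (at y) (c *s v) = c * frechet_derivative f (at y) v"
    using L by auto
qed

lemma holo_fun_on_open: "holo_fun_on Q f \<Longrightarrow> open Q"
  by (simp add: holo_fun_on_def)

lemma holo_fun_on_subset: "holo_fun_on Q f \<Longrightarrow> open V \<Longrightarrow> V \<subseteq> Q \<Longrightarrow> holo_fun_on V f"
  unfolding holo_fun_on_def by blast

lemma holo_fun_on_cont: "holo_fun_on Q f \<Longrightarrow> continuous_on Q f"
  by (metis continuous_at_imp_continuous_on has_derivative_continuous holo_fun_on_deriv(1))

definition EE :: "real \<Rightarrow> complex" where "EE \<theta> = exp (2 * of_real pi * \<i> * of_real \<theta>)"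

lemma EE_circ: "circlepath 0 1 = EE"
  by (simp add: fun_eq_iff circlepath_def part_circlepath_def linepath_def EE_def algebra_simps)

lemma EE_nz: "EE \<theta> \<noteq> 0" by (simp add: EE_def)
lemma norm_EE: "norm (EE \<theta>) = 1" by (simp add: EE_def norm_exp_eq_Re)
lemma cont_EE: "continuous_on S EE" unfolding EE_def by (intro continuous_intros)

lemma cauchy_rep:
  fixes f :: "complex^'n \<Rightarrow> complex"
  assumes hol: "holo_fun_on Q f" and sub: "\<And>t::complex. norm t \<le> 1 \<Longrightarrow> y + t *s u \<in> Q"
  shows "((\<lambda>\<theta>. inverse (EE \<theta>) * f (y + EE \<theta> *s u)) has_integral frechet_derivative f (at y) u) {0..1}"
proof -
  define g where "g t = f (y + t *s u)" for t
  have gd: "(g has_field_derivative frechet_derivative f (at (y + t *s u)) u) (at t)" if "norm t \<le> 1" for t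
  proof -
    have z: "y + t *s u \<in> Q" using sub that by blast
    have "((\<lambda>t. t *s u) has_derivative (\<lambda>h. h *s u)) (at t)"
      by (rule bounded_linear.has_derivative[OF bl_smult has_derivative_ident])
    then have "((\<lambda>t. y + t *s u) has_derivative (\<lambda>h. 0 + h *s u)) (at t)"
      by (intro has_derivative_add has_derivative_const)
    then have a: "((\<lambda>t. y + t *s u) has_derivative (\<lambda>h. h *s u)) (at t)" by simp
    have "(g has_derivative (\<lambda>h. frechet_derivative f (at (y + t *s u)) (h *s u))) (at t)"
      unfolding g_def using has_derivative_compose[OF a holo_fun_on_deriv(1)[OF hol z]] by (simp add: o_def)
    moreover have "(\<lambda>h. frechet_derivative f (at (y + t *s u)) (h *s u)) = (*) (frechet_derivative f (at (y + t *s u)) u)"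
      by (rule ext) (simp add: holo_fun_on_deriv(2)[OF hol z] mult.commute)
    ultimately show ?thesis unfolding has_field_derivative_def by simp
  qed
  have contg: "continuous_on (cball 0 1) g"
    by (rule continuous_at_imp_continuous_on) (metis gd DERIV_isCont mem_cball_0)
  have holg: "g holomorphic_on ball 0 1"
    unfolding holomorphic_on_def field_differentiable_def
    using gd by (metis DERIV_subset mem_ball_0 less_imp_le subset_UNIV top_greatest)
  have "((\<lambda>t. g t / (t - 0) ^ Suc 1) has_contour_integral ((2 * pi * \<i>) / fact 1 * (deriv ^^ 1) g 0)) (circlepath 0 1)"
    by (rule Cauchy_has_contour_integral_higher_derivative_circlepath[OF contg holg]) simp
  moreover have "deriv g 0 = frechet_derivative f (at y) u"
    using gd[of 0] by (simp add: DERIV_imp_deriv)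
  ultimately have "((\<lambda>\<theta>. g (EE \<theta>) / (EE \<theta>)^2 * vector_derivative (circlepath 0 1) (at \<theta> within {0..1}))
      has_integral (2 * pi * \<i>) * frechet_derivative f (at y) u) {0..1}"
    unfolding has_contour_integral_def EE_circ by (simp add: power2_eq_square)
  then have "((\<lambda>\<theta>. g (EE \<theta>) / (EE \<theta>)^2 * (2 * pi * \<i> * EE \<theta>))
      has_integral (2 * pi * \<i>) * frechet_derivative f (at y) u) {0..1}"
    by (rule has_integral_eq[rotated]) (simp add: vector_derivative_circlepath01 EE_def)
  then have "((\<lambda>\<theta>. inverse (2 * pi * \<i>) * (g (EE \<theta>) / (EE \<theta>)^2 * (2 * pi * \<i> * EE \<theta>)))
      has_integral inverse (2 * pi * \<i>) * ((2 * pi * \<i>) * frechet_derivative f (at y) u)) {0..1}"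
    by (rule has_integral_mult_right)
  then have "((\<lambda>\<theta>. inverse (EE \<theta>) * f (y + EE \<theta> *s u))
      has_integral inverse (2 * pi * \<i>) * ((2 * pi * \<i>) * frechet_derivative f (at y) u)) {0..1}"
    by (rule has_integral_eq[rotated]) (simp add: g_def EE_nz power2_eq_square field_simps)
  then show ?thesis
    by (rule has_integral_eq_rhs) (simp add: field_simps)
qed


lemma cont_shift:
  "continuous_on (S \<times> T) (\<lambda>p. fst p + EE (snd p) *s (u::complex^'n))"
proof -
  have "continuous_on (S \<times> T) (\<lambda>p. EE (snd p))"
    unfolding EE_def by (intro continuous_intros)
  then have "continuous_on (S \<times> T) (\<lambda>p. EE (snd p) *s u)"
    by (rule bounded_linear.continuous_on[OF bl_smult])
  then show ?thesis by (intro continuous_intros)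
qed

lemma Df_cont:
  fixes f :: "complex^'n \<Rightarrow> complex"
  assumes hol: "holo_fun_on Q f" and S: "\<And>z t. z \<in> S \<Longrightarrow> norm t \<le> 1 \<Longrightarrow> z + t *s u \<in> Q"
  shows "continuous_on S (\<lambda>z. frechet_derivative f (at z) u)"
proof -
  have eq: "frechet_derivative f (at z) u = integral (cbox 0 1) (\<lambda>\<theta>. inverse (EE \<theta>) * f (z + EE \<theta> *s u))"
    if "z \<in> S" for z
    using cauchy_rep[OF hol, of z u] S[OF that] by (simp add: cbox_interval integral_unique)
  have c1: "continuous_on (S \<times> cbox 0 1) (\<lambda>p. f (fst p + EE (snd p) *s u))"
  proof (rule continuous_on_compose2[OF holo_fun_on_cont[OF hol] cont_shift])
    show "(\<lambda>p. fst p + EE (snd p) *s u) ` (S \<times> cbox 0 1) \<subseteq> Q"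
      using S norm_EE by fastforce
  qed
  have "continuous_on (S \<times> cbox 0 1) (\<lambda>p. EE (snd p))"
    unfolding EE_def by (intro continuous_intros)
  then have c2: "continuous_on (S \<times> cbox 0 1) (\<lambda>p. inverse (EE (snd p)))"
    by (rule continuous_on_inverse) (auto simp: EE_nz)
  have "continuous_on (S \<times> cbox 0 1) (\<lambda>(z, \<theta>). inverse (EE \<theta>) * f (z + EE \<theta> *s u))"
    using continuous_on_mult[OF c2 c1] by (simp add: case_prod_beta)
  then have "continuous_on S (\<lambda>z. integral (cbox 0 1) (\<lambda>\<theta>. inverse (EE \<theta>) * f (z + EE \<theta> *s u)))"
    by (rule integral_continuous_on_param)
  then show ?thesis using eq by (simp add: continuous_on_eq)
qed

lemma scale_decomp:
  fixes u :: "complex^'n"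
  assumes "r > 0"
  obtains c u' where "c \<noteq> 0" "u = c *s u'" "norm u' \<le> r"
proof -
  define c where "c = complex_of_real ((norm u + 1) / r)"
  have pos: "(norm u + 1) / r > 0" using assms by (simp add: add_nonneg_pos)
  have c0: "c \<noteq> 0" unfolding c_def of_real_eq_0_iff using pos by linarith
  define u' where "u' = inverse c *s u"
  have "u = c *s u'" using c0 by (simp add: u'_def vector_smult_assoc)
  moreover have "norm u' \<le> r"
  proof -
    have nc: "norm c = (norm u + 1) / r" unfolding c_def norm_of_real using pos assms by simp
    have "norm u' = norm u / norm c" by (simp add: u'_def norm_smult_vec norm_inverse divide_inverse mult.commute)
    also have "\<dots> = norm u * r / (norm u + 1)" by (subst nc) (simp only: divide_divide_eq_right)
    finally have "norm u' = norm u * r / (norm u + 1)" .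
    also have "\<dots> \<le> r" proof - have d: "norm u + 1 > 0" by (simp add: add_nonneg_pos) show ?thesis using assms d by (simp add: pos_divide_le_eq distrib_left) qed
    finally show ?thesis .
  qed
  ultimately show ?thesis using c0 that by blast
qed

lemma norm_tu: "norm (t::complex) \<le> 1 \<Longrightarrow> norm (u::complex^'n) \<le> r \<Longrightarrow> norm (t *s u) \<le> r"
proof -
  assume a: "norm t \<le> 1" "norm u \<le> r"
  have "norm t * norm u \<le> 1 * r" using a by (intro mult_mono) auto
  then show ?thesis by (simp add: norm_smult_vec)
qed

lemma dist_add_small:
  fixes y v :: "'a::real_normed_vector"
  assumes "dist x y < a" "norm v \<le> b"
  shows "dist x (y + v) < a + b"
proof -
  have "dist x (y + v) \<le> dist x y + dist y (y + v)" by (rule dist_triangle)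
  also have "dist y (y + v) = norm v" by (simp add: dist_norm)
  finally show ?thesis using assms by linarith
qed

lemma dist_add_small_le:
  fixes y v :: "'a::real_normed_vector"
  assumes "dist x y \<le> a" "norm v \<le> b"
  shows "dist x (y + v) \<le> a + b"
proof -
  have "dist x (y + v) \<le> dist x y + dist y (y + v)" by (rule dist_triangle)
  also have "dist y (y + v) = norm v" by (simp add: dist_norm)
  finally show ?thesis using assms by linarith
qed

lemma Df_cont_any:
  fixes f :: "complex^'n \<Rightarrow> complex"
  assumes hol: "holo_fun_on Q f" and r: "r > 0" and sub: "cball x (3*r) \<subseteq> Q"
  shows "continuous_on (ball x (2*r)) (\<lambda>z. frechet_derivative f (at z) v)"
proof -
  obtain c v' where c: "c \<noteq> 0" "v = c *s v'" "norm v' \<le> r" using scale_decomp[OF r] by blast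
  have "continuous_on (ball x (2*r)) (\<lambda>z. frechet_derivative f (at z) v')"
  proof (rule Df_cont[OF hol])
    fix z and t :: complex assume z: "z \<in> ball x (2*r)" and t: "norm t \<le> 1"
    have "norm (t *s v') \<le> r" using t c(3) by (rule norm_tu)
    then have "dist x (z + t *s v') < 2 * r + r" using z by (intro dist_add_small) auto
    then show "z + t *s v' \<in> Q" using sub by auto
  qed
  then have "continuous_on (ball x (2*r)) (\<lambda>z. c * frechet_derivative f (at z) v')"
    by (intro continuous_intros)
  moreover have "frechet_derivative f (at z) v = c * frechet_derivative f (at z) v'" if "z \<in> ball x (2*r)" for z
  proof -
    have "z \<in> Q" using that sub r by auto
    then show ?thesis using c(2) holo_fun_on_deriv(2)[OF hol] by simp
  qed
  ultimately show ?thesis by (metis (no_types, lifting) continuous_on_cong)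
qed


lemma Df_deriv_small:
  fixes f :: "complex^'n \<Rightarrow> complex"
  assumes hol: "holo_fun_on Q f" and r: "r > 0" and sub: "cball x (3*r) \<subseteq> Q" and u: "norm u \<le> r"
  shows "(\<lambda>y. frechet_derivative f (at y) u) differentiable (at x)"
proof -
  let ?U = "ball x r"
  define P where "P y \<theta> = inverse (EE \<theta>) * f (y + EE \<theta> *s u)" for y \<theta>
  define D where "D y h = inverse (EE (snd y)) * frechet_derivative f (at (fst y + EE (snd y) *s u)) h" for y h
  define fx where "fx y \<theta> = Blinfun (D (y, \<theta>))" for y \<theta>
  have inQ: "y + t *s u \<in> Q" if "y \<in> ball x (2*r)" "norm t \<le> 1" for y t
  proof -
    have "norm (t *s u) \<le> r" using that(2) u by (rule norm_tu)
    then have "dist x (y + t *s u) < 2 * r + r" using that(1) by (intro dist_add_small) auto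
    then show ?thesis using sub by auto
  qed
  have bl: "bounded_linear (D (y, \<theta>))" if "y \<in> ball x (2*r)" for y \<theta>
  proof -
    have "y + EE \<theta> *s u \<in> Q" using inQ[OF that] norm_EE by simp
    then have "bounded_linear (frechet_derivative f (at (y + EE \<theta> *s u)))"
      using holo_fun_on_deriv(1)[OF hol] has_derivative_bounded_linear by blast
    then show ?thesis unfolding D_def by (simp add: bounded_linear_compose[OF bounded_linear_mult_right])
  qed
  have rep: "((P y) has_integral frechet_derivative f (at y) u) (cbox 0 1)" if "y \<in> ball x (2*r)" for y
    unfolding P_def cbox_interval by (rule cauchy_rep[OF hol]) (use inQ that in auto)
  have lei: "((\<lambda>y. integral (cbox 0 1) (P y)) has_derivative integral (cbox 0 1) (fx x)) (at x within ?U)"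
  proof (rule leibniz_rule)
    fix y \<theta> assume y: "y \<in> ?U" and th: "\<theta> \<in> cbox (0::real) 1"
    have y2: "y \<in> ball x (2*r)" using y r by auto
    have z: "y + EE \<theta> *s u \<in> Q" using inQ[OF y2] norm_EE by simp
    have a: "((\<lambda>y. y + EE \<theta> *s u) has_derivative (\<lambda>h. h)) (at y)"
      by (rule has_derivative_add_const[OF has_derivative_ident])
    have "((\<lambda>y. f (y + EE \<theta> *s u)) has_derivative frechet_derivative f (at (y + EE \<theta> *s u))) (at y)"
      using has_derivative_compose[OF a holo_fun_on_deriv(1)[OF hol z]] by (simp add: o_def)
    then have "((\<lambda>y. P y \<theta>) has_derivative D (y, \<theta>)) (at y)"
      unfolding P_def D_def by (auto intro!: derivative_eq_intros)
    then show "((\<lambda>y. P y \<theta>) has_derivative blinfun_apply (fx y \<theta>)) (at y within ?U)"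
      unfolding fx_def bounded_linear_Blinfun_apply[OF bl[OF y2]] by (rule has_derivative_at_withinI)
  next
    fix y assume "y \<in> ?U"
    then have "y \<in> ball x (2*r)" using r by auto
    then show "P y integrable_on cbox 0 1" using rep by blast
  next
    show "continuous_on (?U \<times> cbox 0 1) (\<lambda>(y, \<theta>). fx y \<theta>)"
    proof (rule continuous_on_blinfun_componentwise)
      fix i :: "complex^'n" assume "i \<in> Basis"
      have c1: "continuous_on (?U \<times> cbox 0 1) (\<lambda>p. frechet_derivative f (at (fst p + EE (snd p) *s u)) i)"
      proof (rule continuous_on_compose2[OF Df_cont_any[OF hol r sub, of i] cont_shift])
        show "(\<lambda>p. fst p + EE (snd p) *s u) ` (?U \<times> cbox 0 1) \<subseteq> ball x (2 * r)"
        proof clarsimp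
          fix y :: "complex^'n" and \<theta> :: real assume "dist x y < r"
          have "norm (EE \<theta> *s u) \<le> r" using u norm_EE by (intro norm_tu) auto
          then have "dist x (y + EE \<theta> *s u) < r + r" using \<open>dist x y < r\<close> by (intro dist_add_small) auto
          then show "dist x (y + EE \<theta> *s u) < 2 * r" by simp
        qed
      qed
      have "continuous_on (?U \<times> cbox 0 1) (\<lambda>p. EE (snd p))"
        unfolding EE_def by (intro continuous_intros)
      then have c2: "continuous_on (?U \<times> cbox 0 1) (\<lambda>p. inverse (EE (snd p)))"
        by (rule continuous_on_inverse) (auto simp: EE_nz)
      have "continuous_on (?U \<times> cbox 0 1) (\<lambda>p. D p i)"
        unfolding D_def by (rule continuous_on_mult[OF c2 c1])
      moreover have "D p i = blinfun_apply ((\<lambda>(y, \<theta>). fx y \<theta>) p) i" if "p \<in> ?U \<times> cbox 0 1" for p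
      proof -
        have "fst p \<in> ball x (2*r)" using that r by auto
        then show ?thesis using bl[of "fst p" "snd p"] by (simp add: fx_def case_prod_beta bounded_linear_Blinfun_apply)
      qed
      ultimately show "continuous_on (?U \<times> cbox 0 1) (\<lambda>p. blinfun_apply ((\<lambda>(y, \<theta>). fx y \<theta>) p) i)"
        by (metis (no_types, lifting) continuous_on_cong)
    qed
  qed (use r in auto)
  then have "((\<lambda>y. integral (cbox 0 1) (P y)) has_derivative integral (cbox 0 1) (fx x)) (at x)"
    using at_within_open[of x ?U] r by simp
  then have "((\<lambda>y. frechet_derivative f (at y) u) has_derivative integral (cbox 0 1) (fx x)) (at x)"
  proof (rule has_derivative_transform_within_open[OF _ open_ball])
    show "x \<in> ?U" using r by simp
    fix y assume "y \<in> ?U"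
    then have "y \<in> ball x (2*r)" using r by auto
    then show "integral (cbox 0 1) (P y) = frechet_derivative f (at y) u" using rep integral_unique by blast
  qed
  then show ?thesis unfolding differentiable_def by blast
qed

lemma Df_deriv:
  fixes f :: "complex^'n \<Rightarrow> complex"
  assumes hol: "holo_fun_on Q f" and x: "x \<in> Q"
  shows "((\<lambda>y. frechet_derivative f (at y) u) has_derivative
           frechet_derivative (\<lambda>y. frechet_derivative f (at y) u) (at x)) (at x)"
proof -
  obtain e where e: "e > 0" "cball x e \<subseteq> Q" using holo_fun_on_open[OF hol] x open_contains_cball by blast
  define r where "r = e / 3"
  have r: "r > 0" "cball x (3*r) \<subseteq> Q" using e by (auto simp: r_def)
  obtain c u' where c: "c \<noteq> 0" "u = c *s u'" "norm u' \<le> r" using scale_decomp[OF r(1)] by blast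
  obtain L where L: "((\<lambda>y. frechet_derivative f (at y) u') has_derivative L) (at x)"
    using Df_deriv_small[OF hol r c(3)] unfolding differentiable_def by blast
  have "((\<lambda>y. c * frechet_derivative f (at y) u') has_derivative (\<lambda>h. c * L h)) (at x)"
    by (rule has_derivative_mult_right[OF L])
  then have "((\<lambda>y. frechet_derivative f (at y) u) has_derivative (\<lambda>h. c * L h)) (at x)"
  proof (rule has_derivative_transform_within_open[OF _ holo_fun_on_open[OF hol] x])
    fix y assume "y \<in> Q"
    then show "c * frechet_derivative f (at y) u' = frechet_derivative f (at y) u"
      using c(2) holo_fun_on_deriv(2)[OF hol] by simp
  qed
  then show ?thesis by (metis frechet_derivative_at)
qed


definition clin :: "(complex^'n \<Rightarrow> complex) \<Rightarrow> bool" where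
  "clin \<phi> \<longleftrightarrow> (\<forall>c v. \<phi> (c *s v) = c * \<phi> v) \<and> (\<forall>v w. \<phi> (v + w) = \<phi> v + \<phi> w)"

lemma clin_zero: "clin \<phi> \<Longrightarrow> \<phi> 0 = 0"
proof -
  assume "clin \<phi>"
  then have "\<phi> (0 *s 0) = 0 * \<phi> 0" unfolding clin_def by blast
  then show ?thesis by simp
qed

lemma clin_sum:
  assumes c: "clin \<phi>" and A: "finite A"
  shows "\<phi> (\<Sum>l\<in>A. g l) = (\<Sum>l\<in>A. \<phi> (g l))"
  using A
proof (induction A rule: finite_induct)
  case empty then show ?case by (simp add: clin_zero[OF c])
next
  case (insert x F) then show ?case using c by (simp add: clin_def)
qed

lemma clin_expand: "clin \<phi> \<Longrightarrow> \<phi> v = (\<Sum>l\<in>UNIV. v$l * \<phi> (axis l 1))"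
proof -
  assume c: "clin \<phi>"
  have "\<phi> v = \<phi> (\<Sum>l\<in>UNIV. (v$l) *s axis l 1)" by (simp add: basis_expansion)
  also have "\<dots> = (\<Sum>l\<in>UNIV. \<phi> ((v$l) *s axis l 1))" by (rule clin_sum[OF c]) simp
  also have "\<dots> = (\<Sum>l\<in>UNIV. v$l * \<phi> (axis l 1))" using c by (simp add: clin_def)
  finally show ?thesis .
qed

lemma Df_clin:
  assumes "holo_fun_on Q f" "y \<in> Q"
  shows "clin (frechet_derivative f (at y))"
proof -
  have "linear (frechet_derivative f (at y))"
    using holo_fun_on_deriv(1)[OF assms] has_derivative_bounded_linear bounded_linear.linear by blast
  then show ?thesis unfolding clin_def using holo_fun_on_deriv(2)[OF assms] by (simp add: linear_add)
qed

abbreviation D2 :: "(complex^'n \<Rightarrow> complex) \<Rightarrow> complex^'n \<Rightarrow> complex^'n \<Rightarrow> complex^'n \<Rightarrow> complex" where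
  "D2 f x u \<equiv> frechet_derivative (\<lambda>y. frechet_derivative f (at y) u) (at x)"

lemma D2_clin1:
  assumes hol: "holo_fun_on Q f" and x: "x \<in> Q"
  shows "clin (\<lambda>u. D2 f x u s)"
proof -
  have sc: "D2 f x (c *s u) = (\<lambda>s. c * D2 f x u s)" for c u
  proof -
    have "((\<lambda>y. c * frechet_derivative f (at y) u) has_derivative (\<lambda>s. c * D2 f x u s)) (at x)"
      by (rule has_derivative_mult_right[OF Df_deriv[OF hol x]])
    then have "((\<lambda>y. frechet_derivative f (at y) (c *s u)) has_derivative (\<lambda>s. c * D2 f x u s)) (at x)"
      by (rule has_derivative_transform_within_open[OF _ holo_fun_on_open[OF hol] x])
         (simp add: holo_fun_on_deriv(2)[OF hol])
    then show ?thesis by (rule frechet_derivative_at[symmetric])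
  qed
  have ad: "D2 f x (u + v) = (\<lambda>s. D2 f x u s + D2 f x v s)" for u v
  proof -
    have "((\<lambda>y. frechet_derivative f (at y) u + frechet_derivative f (at y) v) has_derivative (\<lambda>s. D2 f x u s + D2 f x v s)) (at x)"
      by (rule has_derivative_add[OF Df_deriv[OF hol x] Df_deriv[OF hol x]])
    then have "((\<lambda>y. frechet_derivative f (at y) (u + v)) has_derivative (\<lambda>s. D2 f x u s + D2 f x v s)) (at x)"
      by (rule has_derivative_transform_within_open[OF _ holo_fun_on_open[OF hol] x])
         (use Df_clin[OF hol] in \<open>simp add: clin_def\<close>)
    then show ?thesis by (rule frechet_derivative_at[symmetric])
  qed
  show ?thesis unfolding clin_def using sc ad by simp
qed

lemma D2_sym:
  assumes hol: "holo_fun_on Q f" and x: "x \<in> Q"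
  shows "D2 f x u s = D2 f x s u"
proof -
  obtain r where r: "r > 0" "ball x r \<subseteq> Q" using holo_fun_on_open[OF hol] x open_contains_ball by blast
  have dg: "(f has_derivative frechet_derivative f (at y)) (at y)" if "y \<in> ball x r" for y
    using holo_fun_on_deriv(1)[OF hol] r that by blast
  show ?thesis
    by (rule schwarz[where g=f and Dg="\<lambda>y. frechet_derivative f (at y)" and s=u and u=s and D2s="D2 f x u" and D2u="D2 f x s", OF r(1) dg Df_deriv[OF hol x] Df_deriv[OF hol x]])
qed

lemma holo_map_comp: "holo_map_on Q a \<Longrightarrow> holo_fun_on Q (\<lambda>z. a z $ j)"
  by (simp add: holo_map_on_def)

lemma vec_deriv:
  fixes a :: "complex^'n \<Rightarrow> complex^'m"
  assumes ha: "holo_map_on Q a" and y: "y \<in> Q"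
  shows "(a has_derivative (\<lambda>h. \<chi> j. frechet_derivative (\<lambda>z. a z $ j) (at y) h)) (at y)"
proof -
  have c: "((\<lambda>z. a z $ j) has_derivative frechet_derivative (\<lambda>z. a z $ j) (at y)) (at y)" for j
    by (rule holo_fun_on_deriv(1)[OF holo_map_comp[OF ha] y])
  have "((\<lambda>x. \<Sum>j\<in>UNIV. (a x $ j) *s axis j 1) has_derivative
      (\<lambda>h. \<Sum>j\<in>UNIV. (frechet_derivative (\<lambda>z. a z $ j) (at y) h) *s axis j (1::complex))) (at y)"
    by (rule has_derivative_sum) (rule bounded_linear.has_derivative[OF bl_smult c])
  moreover have "(\<lambda>x. \<Sum>j\<in>UNIV. (a x $ j) *s axis j 1) = a" by (simp add: basis_expansion)
  moreover have "(\<lambda>h. \<Sum>j\<in>UNIV. (frechet_derivative (\<lambda>z. a z $ j) (at y) h) *s axis j (1::complex))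
      = (\<lambda>h. \<chi> j. frechet_derivative (\<lambda>z. a z $ j) (at y) h)"
  proof (rule ext)
    fix h
    show "(\<Sum>j\<in>UNIV. (frechet_derivative (\<lambda>z. a z $ j) (at y) h) *s axis j (1::complex))
      = (\<chi> j. frechet_derivative (\<lambda>z. a z $ j) (at y) h)"
      using basis_expansion[of "\<chi> j. frechet_derivative (\<lambda>z. a z $ j) (at y) h"] by simp
  qed
  ultimately show ?thesis by simp
qed

lemma vec_fd:
  fixes a :: "complex^'n \<Rightarrow> complex^'m"
  assumes ha: "holo_map_on Q a" and y: "y \<in> Q"
  shows "frechet_derivative a (at y) h $ j = frechet_derivative (\<lambda>z. a z $ j) (at y) h"
  by (simp flip: frechet_derivative_at[OF vec_deriv[OF assms]])



lemma TG_cong: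
  assumes cd: "\<And>i. i < k \<Longrightarrow> c i = d i"
  shows "TG w c k v = TG w d k v"
proof -
  have "(\<Prod>i<k. c i (v (\<rho> (2*i+1))) (v (\<rho> (2*i+2)))) = (\<Prod>i<k. d i (v (\<rho> (2*i+1))) (v (\<rho> (2*i+2))))" for \<rho>
    by (rule prod.cong[OF refl]) (simp add: cd)
  then show ?thesis unfolding TG_def by simp
qed

lemma TG_tele:
  "TG w (\<lambda>_. \<lambda>z z'. c z z' + (g z * w z' - g z' * w z)) k v = TG w (\<lambda>_. c) k v"
proof -
  define c' where "c' = (\<lambda>z z'. c z z' + (g z * w z' - g z' * w z))"
  define F where "F m = (\<lambda>i::nat. if i < m then c' else c)" for m :: nat
  have step: "m \<le> k \<longrightarrow> TG w (F m) k v = TG w (\<lambda>_. c) k v" for m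
  proof (induction m)
    case 0 then show ?case by (simp add: F_def)
  next
    case (Suc m)
    show ?case
    proof
      assume mk: "Suc m \<le> k"
      then have m: "m < k" by simp
      have X: "(\<lambda>x y. 1 * c x y + (\<lambda>x y. (-1) * (w x * g y) + g x * w y) x y) = c'"
        by (simp add: c'_def fun_eq_iff algebra_simps)
      have e0: "F (Suc m) = (F m)(m := c')" by (rule ext) (simp add: F_def)
      have e1: "F (Suc m) = (F m)(m := (\<lambda>x y. 1 * c x y + (\<lambda>x y. (-1) * (w x * g y) + g x * w y) x y))"
        unfolding X by (rule e0)
      have "TG w (F (Suc m)) k v = 1 * TG w ((F m)(m := c)) k v + TG w ((F m)(m := (\<lambda>x y. (-1) * (w x * g y) + g x * w y))) k v"
        unfolding e1 by (rule TG_slot_lin[OF m])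
      also have "TG w ((F m)(m := (\<lambda>x y. (-1) * (w x * g y) + g x * w y))) k v
          = (-1) * TG w ((F m)(m := (\<lambda>x y. w x * g y))) k v + TG w ((F m)(m := (\<lambda>x y. g x * w y))) k v"
        by (rule TG_slot_lin[OF m])
      also have "TG w ((F m)(m := (\<lambda>x y. w x * g y))) k v = 0"
        by (rule TG_zero2[OF m]) simp
      also have "TG w ((F m)(m := (\<lambda>x y. g x * w y))) k v = 0"
        by (rule TG_zero1[OF m]) simp
      also have "(F m)(m := c) = F m" by (rule ext) (simp add: F_def)
      finally show "TG w (F (Suc m)) k v = TG w (\<lambda>_. c) k v" using Suc.IH mk by simp
    qed
  qed
  have "TG w (F k) k v = TG w (\<lambda>_. c') k v" by (rule TG_cong) (simp add: F_def)
  then show ?thesis using step[of k] by (simp add: c'_def)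
qed

lemma TG_scale_b: "TG w (\<lambda>_. \<lambda>z z'. f * c z z') k v = f^k * TG w (\<lambda>_. c) k v"
  unfolding TG_def by (simp add: prod.distrib sum_distrib_left algebra_simps)

lemma TG_scale_w: "TG (\<lambda>z. f * w z) c k v = f * TG w c k v"
  unfolding TG_def by (simp add: sum_distrib_left algebra_simps)

lemma contact_top_formula:
  "contact_top k a x v = TG (\<lambda>z. cpair (a x) z)
      (\<lambda>_. \<lambda>z z'. cpair (frechet_derivative a (at x) z) z' - cpair (frechet_derivative a (at x) z') z) k v / 2^k"
proof -
  have "contact_top k a x v = wedge 1 (2*k) (\<lambda>v. (\<lambda>z. cpair (a x) z) (v 0))
      (wpow2 (\<lambda>v. (\<lambda>z z'. cpair (frechet_derivative a (at x) z) z' - cpair (frechet_derivative a (at x) z') z) (v 0) (v 1)) k) v"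
    by (simp add: contact_top_def form1_def dform1_def)
  also have "\<dots> = TG (\<lambda>z. cpair (a x) z)
      (\<lambda>_. \<lambda>z z'. cpair (frechet_derivative a (at x) z) z' - cpair (frechet_derivative a (at x) z') z) k v / 2^k"
    by (rule wedge_top_formula)
  finally show ?thesis .
qed

lemma cpair_expand: "cpair u v = (\<Sum>j\<in>UNIV. u $ j * v $ j)"
  by (simp add: cpair_def)

lemma scaling:
  fixes a b :: "complex^'n \<Rightarrow> complex^'n"
  assumes ha: "holo_map_on Q a" and hb: "holo_map_on Q b" and hf: "holo_fun_on Q f" and x0: "x0 \<in> Q"
    and eq: "\<And>y. y \<in> Q \<Longrightarrow> a y = f y *s b y"
    and van: "contact_top k b x0 = (\<lambda>v. 0)"
  shows "contact_top k a x0 = (\<lambda>v. 0)"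
proof
  fix v
  define f0 where "f0 = f x0"
  define Df where "Df = frechet_derivative f (at x0)"
  define Wb where "Wb z = cpair (b x0) z" for z
  define Bb where "Bb z z' = cpair (frechet_derivative b (at x0) z) z' - cpair (frechet_derivative b (at x0) z') z" for z z'
  have comp: "frechet_derivative a (at x0) z $ j = f0 * (frechet_derivative b (at x0) z $ j) + Df z * b x0 $ j" for z j
  proof -
    have "((\<lambda>y. f y * b y $ j) has_derivative (\<lambda>h. f x0 * frechet_derivative (\<lambda>y. b y $ j) (at x0) h + Df h * b x0 $ j)) (at x0)"
      unfolding Df_def
      by (rule has_derivative_mult[OF holo_fun_on_deriv(1)[OF hf x0] holo_fun_on_deriv(1)[OF holo_map_comp[OF hb] x0]])
    then have "((\<lambda>y. a y $ j) has_derivative (\<lambda>h. f x0 * frechet_derivative (\<lambda>y. b y $ j) (at x0) h + Df h * b x0 $ j)) (at x0)"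
      by (rule has_derivative_transform_within_open[OF _ holo_fun_on_open[OF hf] x0]) (simp add: eq)
    then have "frechet_derivative (\<lambda>y. a y $ j) (at x0) z = f x0 * frechet_derivative (\<lambda>y. b y $ j) (at x0) z + Df z * b x0 $ j"
      by (simp flip: frechet_derivative_at)
    then show ?thesis by (simp add: vec_fd[OF ha x0] vec_fd[OF hb x0] f0_def)
  qed
  have cp: "cpair (frechet_derivative a (at x0) z) z' = f0 * cpair (frechet_derivative b (at x0) z) z' + Df z * Wb z'" for z z'
    by (simp add: cpair_expand comp Wb_def sum_distrib_left sum.distrib algebra_simps)
  have wa: "cpair (a x0) z = f0 * Wb z" for z
    using eq[OF x0] by (simp add: cpair_expand Wb_def f0_def sum_distrib_left algebra_simps)
  have "contact_top k a x0 v = TG (\<lambda>z. f0 * Wb z) (\<lambda>_. \<lambda>z z'. f0 * Bb z z' + (Df z * Wb z' - Df z' * Wb z)) k v / 2^k"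
    unfolding contact_top_formula wa cp Bb_def by (simp add: algebra_simps)
  also have "\<dots> = f0 * TG Wb (\<lambda>_. \<lambda>z z'. f0 * Bb z z') k v / 2^k"
    by (simp add: TG_scale_w TG_tele)
  also have "\<dots> = f0 * f0^k * TG Wb (\<lambda>_. Bb) k v / 2^k"
    by (simp add: TG_scale_b)
  also have "TG Wb (\<lambda>_. Bb) k v = 0"
    using fun_cong[OF van, of v] unfolding contact_top_formula Wb_def Bb_def by simp
  finally show "contact_top k a x0 v = 0" by simp
qed


lemma TG_w_lin2: "TG (\<lambda>x. r * w1 x + s * w2 x) c k v = r * TG w1 c k v + s * TG w2 c k v"
  unfolding TG_def by (simp add: sum_distrib_left algebra_simps sum.distrib)

theorem local_main:
  fixes a Y :: "complex^'n \<Rightarrow> complex^'n" and h :: "complex^'n \<Rightarrow> complex"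
  assumes ha: "holo_map_on Q a" and hY: "holo_map_on Q Y" and hh: "holo_fun_on Q h" and x0: "x0 \<in> Q"
    and lie: "\<And>y v. y \<in> Q \<Longrightarrow> lie_1form Y a y v = h y * cpair (a y) v"
    and van: "contact_top k a x0 = (\<lambda>v. 0)"
  shows "frechet_derivative (contact_H k a) (at x0) (Y x0) = 0"
proof -
  define A where "A j = (\<lambda>z. a z $ j)" for j
  define Yc where "Yc l = (\<lambda>z. Y z $ l)" for l
  have hA: "holo_fun_on Q (A j)" for j unfolding A_def by (rule holo_map_comp[OF ha])
  have hYc: "holo_fun_on Q (Yc l)" for l unfolding Yc_def by (rule holo_map_comp[OF hY])
  have opQ: "open Q" by (rule holo_fun_on_open[OF hh])
  define Da where "Da j y = frechet_derivative (A j) (at y)" for j y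
  define DY where "DY l y = frechet_derivative (Yc l) (at y)" for l y
  define D2a where "D2a j u = D2 (A j) x0 u" for j u
  define D2Y where "D2Y l u = D2 (Yc l) x0 u" for l u
  define Dh where "Dh = frechet_derivative h (at x0)"
  define h0 where "h0 = h x0"
  define Y0 where "Y0 = Y x0"
  define K where "K z = (\<chi> l. DY l x0 z)" for z
  define Wf where "Wf y z = (\<Sum>j\<in>UNIV. A j y * z $ j)" for y z
  define Bf where "Bf y z z' = (\<Sum>j\<in>UNIV. Da j y z * z' $ j - Da j y z' * z $ j)" for y z z'
  define e where "e = (\<lambda>i::nat. axis (coord_order i :: 'n) (1::complex))"
  have CT: "contact_top k a y v = TG (Wf y) (\<lambda>_. Bf y) k v / 2^k" if "y \<in> Q" for y v
  proof -
    have 1: "(\<lambda>z. cpair (a y) z) = Wf y" by (rule ext) (simp add: cpair_def Wf_def A_def)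
    have 2: "(\<lambda>z z'. cpair (frechet_derivative a (at y) z) z' - cpair (frechet_derivative a (at y) z') z) = Bf y"
      by (intro ext) (simp add: cpair_def Bf_def vec_fd[OF ha that] Da_def A_def sum_subtractf)
    show ?thesis unfolding contact_top_formula 1 2 ..
  qed
  have Hform: "contact_H k a y = TG (Wf y) (\<lambda>_. Bf y) k e / 2^k" if "y \<in> Q" for y
    unfolding contact_H_def e_def using CT[OF that] by simp
  define W' where "W' z s = (\<Sum>j\<in>UNIV. Da j x0 s * z $ j)" for z s
  define B' where "B' z z' s = (\<Sum>j\<in>UNIV. D2a j z s * z' $ j - D2a j z' s * z $ j)" for z z' s
  have dW: "((\<lambda>y. Wf y z) has_derivative W' z) (at x0)" for z
    unfolding Wf_def W'_def Da_def
    by (intro has_derivative_sum has_derivative_mult_left holo_fun_on_deriv(1)[OF hA x0])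
  have dB: "((\<lambda>y. Bf y z z') has_derivative B' z z') (at x0)" for z z'
    unfolding Bf_def B'_def D2a_def Da_def
    by (intro has_derivative_sum has_derivative_diff has_derivative_mult_left Df_deriv[OF hA x0])
  define DT where "DT s = TG (\<lambda>z. W' z s) (\<lambda>_. Bf x0) k e + (\<Sum>m<k. TG (Wf x0) ((\<lambda>_. Bf x0)(m := \<lambda>z z'. B' z z' s)) k e)" for s
  have "((\<lambda>y. TG (Wf y) (\<lambda>_. Bf y) k e) has_derivative DT) (at x0)"
    unfolding DT_def by (rule TG_has_derivative[OF dW dB])
  then have "((\<lambda>y. inverse (2^k) * TG (Wf y) (\<lambda>_. Bf y) k e) has_derivative (\<lambda>s. inverse (2^k) * DT s)) (at x0)"
    by (rule has_derivative_mult_right)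
  then have dH: "(contact_H k a has_derivative (\<lambda>s. inverse (2^k) * DT s)) (at x0)"
    by (rule has_derivative_transform_within_open[OF _ opQ x0]) (simp add: Hform divide_inverse mult.commute)
  have FD: "frechet_derivative (contact_H k a) (at x0) Y0 = inverse (2^k) * DT Y0"
    using frechet_derivative_at[OF dH] by metis
  have lieE: "(\<Sum>j\<in>UNIV. Da j y (Y y) * v $ j) + (\<Sum>j\<in>UNIV. A j y * DY j y v) = h y * Wf y v" if "y \<in> Q" for y v
    using lie[OF that, of v] unfolding lie_1form_def cpair_def
    by (simp add: vec_fd[OF ha that] vec_fd[OF hY that] Da_def DY_def A_def Yc_def Wf_def)
  have W'Y: "W' z Y0 = h0 * Wf x0 z + (-1) * Wf x0 (K z)" for z
  proof -
    have "Wf x0 (K z) = (\<Sum>j\<in>UNIV. A j x0 * DY j x0 z)" by (simp add: Wf_def K_def)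
    moreover have "W' z Y0 = (\<Sum>j\<in>UNIV. Da j x0 (Y x0) * z $ j)" by (simp add: W'_def Y0_def)
    ultimately show ?thesis using lieE[OF x0, of z] by (simp add: h0_def algebra_simps)
  qed
  have DaL: "clin (Da j y)" if "y \<in> Q" for j y unfolding Da_def by (rule Df_clin[OF hA that])
  have D2L: "clin (\<lambda>u. D2a j u s)" for j s unfolding D2a_def by (rule D2_clin1[OF hA x0])
  have D2aS: "D2a j u s = D2a j s u" for j u s unfolding D2a_def by (rule D2_sym[OF hA x0])
  have D2YS: "D2Y j u s = D2Y j s u" for j u s unfolding D2Y_def by (rule D2_sym[OF hYc x0])
  have dlie: "(\<Sum>j\<in>UNIV. D2a j z Y0 * z' $ j) = h0 * W' z' z + Dh z * Wf x0 z'
      - (\<Sum>j\<in>UNIV. Da j x0 (K z) * z' $ j) - (\<Sum>j\<in>UNIV. Da j x0 z * DY j x0 z') - (\<Sum>j\<in>UNIV. A j x0 * D2Y j z' z)" for z z'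
  proof -
    define E where "E y = (\<Sum>j\<in>UNIV. (\<Sum>l\<in>UNIV. Yc l y * Da j y (axis l 1)) * z' $ j) + (\<Sum>j\<in>UNIV. A j y * DY j y z') - h y * Wf y z'" for y
    define E' where "E' s = (\<Sum>j\<in>UNIV. (\<Sum>l\<in>UNIV. Yc l x0 * D2a j (axis l 1) s + DY l x0 s * Da j x0 (axis l 1)) * z' $ j)
        + (\<Sum>j\<in>UNIV. A j x0 * D2Y j z' s + Da j x0 s * DY j x0 z') - (h x0 * W' z' s + Dh s * Wf x0 z')" for s
    have E0: "E y = 0" if "y \<in> Q" for y
    proof -
      have "Da j y (Y y) = (\<Sum>l\<in>UNIV. Yc l y * Da j y (axis l 1))" for j
        using clin_expand[OF DaL[OF that], of j "Y y"] by (simp add: Yc_def)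
      then show ?thesis using lieE[OF that, of z'] by (simp add: E_def)
    qed
    have dE: "(E has_derivative E') (at x0)"
      unfolding E_def E'_def Da_def D2a_def DY_def D2Y_def Dh_def W'_def Wf_def
      by (intro has_derivative_diff has_derivative_add has_derivative_sum has_derivative_mult_left has_derivative_mult
          holo_fun_on_deriv(1)[OF hYc x0] holo_fun_on_deriv(1)[OF hA x0] holo_fun_on_deriv(1)[OF hh x0]
          Df_deriv[OF hA x0] Df_deriv[OF hYc x0])
    have "((\<lambda>y. 0) has_derivative (\<lambda>s. 0)) (at x0)" by simp
    then have "(E has_derivative (\<lambda>s. 0)) (at x0)"
      by (rule has_derivative_transform_within_open[OF _ opQ x0]) (simp add: E0)
    then have E'0: "E' = (\<lambda>s. 0)" by (rule has_derivative_unique[OF dE])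
    have s1: "(\<Sum>l\<in>UNIV. Yc l x0 * D2a j (axis l 1) z) = D2a j z Y0" for j
      using clin_expand[OF D2L[of j z], of Y0] by (simp add: Yc_def Y0_def D2aS)
    have s2: "(\<Sum>l\<in>UNIV. DY l x0 z * Da j x0 (axis l 1)) = Da j x0 (K z)" for j
      using clin_expand[OF DaL[OF x0], of j "K z"] by (simp add: K_def)
    have "E' z = (\<Sum>j\<in>UNIV. (D2a j z Y0 + Da j x0 (K z)) * z' $ j)
        + (\<Sum>j\<in>UNIV. A j x0 * D2Y j z' z + Da j x0 z * DY j x0 z') - (h0 * W' z' z + Dh z * Wf x0 z')"
      unfolding E'_def by (simp add: sum.distrib s1 s2 h0_def)
    then have "(\<Sum>j\<in>UNIV. (D2a j z Y0 + Da j x0 (K z)) * z' $ j)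
        + (\<Sum>j\<in>UNIV. A j x0 * D2Y j z' z + Da j x0 z * DY j x0 z') - (h0 * W' z' z + Dh z * Wf x0 z') = 0"
      using E'0 by simp
    then show ?thesis by (simp add: sum.distrib distrib_right algebra_simps)
  qed
  define Wf0 where "Wf0 = Wf x0"
  define Bf0 where "Bf0 = Bf x0"
  define bK where "bK = (\<lambda>z z'. Bf0 (K z) z' + Bf0 z (K z'))"
  have B'Y: "B' z z' Y0 = h0 * Bf0 z z' + ((-1) * bK z z' + ((-1) * (Wf0 z * Dh z') + Dh z * Wf0 z'))" for z z'
  proof -
    define P where "P z z' = (\<Sum>j\<in>UNIV. D2a j z Y0 * z' $ j)" for z z'
    define Q1 where "Q1 z z' = (\<Sum>j\<in>UNIV. Da j x0 (K z) * z' $ j)" for z z'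
    define Q2 where "Q2 z z' = (\<Sum>j\<in>UNIV. Da j x0 z * DY j x0 z')" for z z'
    define R where "R z z' = (\<Sum>j\<in>UNIV. A j x0 * D2Y j z' z)" for z z'
    have RS: "R z z' = R z' z" for z z' unfolding R_def using D2YS by simp
    have e1: "B' z z' Y0 = P z z' - P z' z" unfolding B'_def P_def by (simp add: sum_subtractf D2aS)
    have e2: "P z z' = h0 * W' z' z + Dh z * Wf0 z' - Q1 z z' - Q2 z z' - R z z'" for z z'
      unfolding P_def Q1_def Q2_def R_def Wf0_def by (rule dlie)
    have e3: "Bf0 z z' = W' z' z - W' z z'" for z z'
      unfolding Bf0_def Bf_def W'_def by (simp add: sum_subtractf)
    have e4: "Bf0 (K z) z' = Q1 z z' - Q2 z' z" for z z'
      unfolding Bf0_def Bf_def Q1_def Q2_def by (simp add: sum_subtractf K_def)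
    have e5: "Bf0 z (K z') = Q2 z z' - Q1 z' z" for z z'
      unfolding Bf0_def Bf_def Q1_def Q2_def by (simp add: sum_subtractf K_def)
    show ?thesis by (simp only: bK_def e4 e5) (simp add: e1 e2 e3 RS[of z' z] algebra_simps)
  qed
  have TG0: "TG Wf0 (\<lambda>_. Bf0) k v = 0" for v
    using CT[OF x0, of v] van by (simp add: Wf0_def Bf0_def)
  have wl: "Wf0 (z + c *s z') = Wf0 z + c * Wf0 z'" for z z' c
    unfolding Wf0_def Wf_def by (simp add: sum.distrib sum_distrib_left algebra_simps)
  have DaA: "Da j x0 (z + c *s z') = Da j x0 z + c * Da j x0 z'" for j z z' c
    using DaL[OF x0, of j] by (simp add: clin_def)
  have bl1: "Bf0 (z + c *s z') y = Bf0 z y + c * Bf0 z' y" for z z' y c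
    unfolding Bf0_def Bf_def DaA by (simp add: sum.distrib sum_distrib_left sum_subtractf algebra_simps)
  have bl2: "Bf0 z (y + c *s y') = Bf0 z y + c * Bf0 z y'" for z y y' c
    unfolding Bf0_def Bf_def DaA by (simp add: sum.distrib sum_distrib_left sum_subtractf algebra_simps)
  have NAT: "TG (\<lambda>z. Wf0 (K z)) (\<lambda>_. Bf0) k e + (\<Sum>m<k. TG Wf0 ((\<lambda>_. Bf0)(m := bK)) k e) = 0"
    unfolding bK_def by (rule TG_natural_deriv[OF wl bl1 bl2 TG0])
  have slot: "TG Wf0 ((\<lambda>_. Bf0)(m := \<lambda>z z'. B' z z' Y0)) k e = h0 * TG Wf0 (\<lambda>_. Bf0) k e - TG Wf0 ((\<lambda>_. Bf0)(m := bK)) k e"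
    if m: "m < k" for m
  proof -
    have "(\<lambda>z z'. B' z z' Y0) = (\<lambda>z z'. h0 * Bf0 z z' + (\<lambda>z z'. (-1) * bK z z' + (\<lambda>z z'. (-1) * (Wf0 z * Dh z') + Dh z * Wf0 z') z z') z z')"
      by (simp add: B'Y)
    then have "TG Wf0 ((\<lambda>_. Bf0)(m := \<lambda>z z'. B' z z' Y0)) k e
       = h0 * TG Wf0 ((\<lambda>_. Bf0)(m := Bf0)) k e + TG Wf0 ((\<lambda>_. Bf0)(m := (\<lambda>z z'. (-1) * bK z z' + (\<lambda>z z'. (-1) * (Wf0 z * Dh z') + Dh z * Wf0 z') z z'))) k e"
      using TG_slot_lin[OF m] by simp
    also have "TG Wf0 ((\<lambda>_. Bf0)(m := (\<lambda>z z'. (-1) * bK z z' + (\<lambda>z z'. (-1) * (Wf0 z * Dh z') + Dh z * Wf0 z') z z'))) k e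
       = (-1) * TG Wf0 ((\<lambda>_. Bf0)(m := bK)) k e + TG Wf0 ((\<lambda>_. Bf0)(m := (\<lambda>z z'. (-1) * (Wf0 z * Dh z') + Dh z * Wf0 z'))) k e"
      by (rule TG_slot_lin[OF m])
    also have "TG Wf0 ((\<lambda>_. Bf0)(m := (\<lambda>z z'. (-1) * (Wf0 z * Dh z') + Dh z * Wf0 z'))) k e
       = (-1) * TG Wf0 ((\<lambda>_. Bf0)(m := (\<lambda>z z'. Wf0 z * Dh z'))) k e + TG Wf0 ((\<lambda>_. Bf0)(m := (\<lambda>z z'. Dh z * Wf0 z'))) k e"
      by (rule TG_slot_lin[OF m])
    also have "TG Wf0 ((\<lambda>_. Bf0)(m := (\<lambda>z z'. Wf0 z * Dh z'))) k e = 0" by (rule TG_zero2[OF m]) simp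
    also have "TG Wf0 ((\<lambda>_. Bf0)(m := (\<lambda>z z'. Dh z * Wf0 z'))) k e = 0" by (rule TG_zero1[OF m]) simp
    also have "(\<lambda>_. Bf0)(m := Bf0) = (\<lambda>_. Bf0)" by (rule ext) simp
    finally have "TG Wf0 ((\<lambda>_. Bf0)(m := \<lambda>z z'. B' z z' Y0)) k e = h0 * TG Wf0 (\<lambda>_. Bf0) k e
        + ((-1) * TG Wf0 ((\<lambda>_. Bf0)(m := bK)) k e + ((-1) * 0 + 0))" .
    then show ?thesis by (simp only: mult_zero_right add_0_right mult_minus1 diff_conv_add_uminus)
  qed
  have "DT Y0 = h0 * TG Wf0 (\<lambda>_. Bf0) k e + (-1) * TG (\<lambda>z. Wf0 (K z)) (\<lambda>_. Bf0) k e
       + (\<Sum>m<k. h0 * TG Wf0 (\<lambda>_. Bf0) k e - TG Wf0 ((\<lambda>_. Bf0)(m := bK)) k e)"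
  proof -
    have eqW: "(\<lambda>z. W' z Y0) = (\<lambda>z. h0 * Wf0 z + (-1) * Wf0 (K z))" by (rule ext) (simp only: W'Y Wf0_def)
    have "TG (\<lambda>z. W' z Y0) (\<lambda>_. Bf0) k e = h0 * TG Wf0 (\<lambda>_. Bf0) k e + (-1) * TG (\<lambda>z. Wf0 (K z)) (\<lambda>_. Bf0) k e"
      unfolding eqW by (rule TG_w_lin2)
    moreover have "(\<Sum>m<k. TG Wf0 ((\<lambda>_. Bf0)(m := \<lambda>z z'. B' z z' Y0)) k e)
       = (\<Sum>m<k. h0 * TG Wf0 (\<lambda>_. Bf0) k e - TG Wf0 ((\<lambda>_. Bf0)(m := bK)) k e)"
      by (rule sum.cong[OF refl]) (simp add: slot)
    ultimately show ?thesis unfolding DT_def Wf0_def Bf0_def by simp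
  qed
  also have "\<dots> = - (TG (\<lambda>z. Wf0 (K z)) (\<lambda>_. Bf0) k e + (\<Sum>m<k. TG Wf0 ((\<lambda>_. Bf0)(m := bK)) k e))"
    by (simp add: TG0 sum_negf)
  also have "\<dots> = 0" using NAT by simp
  finally have "DT Y0 = 0" .
  then show ?thesis using FD by (simp add: Y0_def)
qed


lemma holo_map_on_subset: "holo_map_on Q F \<Longrightarrow> open V \<Longrightarrow> V \<subseteq> Q \<Longrightarrow> holo_map_on V F"
  unfolding holo_map_on_def using holo_fun_on_subset by blast

lemma holo_map_on_open: "holo_map_on Q (F :: complex^'n \<Rightarrow> complex^'m) \<Longrightarrow> open Q"
  unfolding holo_map_on_def using holo_fun_on_open by blast

lemma chart_inj:
  assumes "holo_atlas A" "c \<in> A"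
  shows "inj_on (snd c) (fst c)"
proof -
  obtain V \<phi> where c: "c = (V, \<phi>)" by (cases c)
  then obtain \<psi> where "homeomorphism V (\<phi> ` V) \<phi> \<psi>" using assms unfolding holo_atlas_def by fastforce
  then have "\<And>x. x \<in> V \<Longrightarrow> \<psi> (\<phi> x) = x" unfolding homeomorphism_def by blast
  then show ?thesis using c by (metis fst_conv snd_conv inj_on_inverseI)
qed

lemma loc_at:
  assumes "inj_on (snd c) (fst c)" "p \<in> fst c"
  shows "loc c g (snd c p) = g p"
  using assms by (simp add: loc_def)

theorem theorem6p4:
  fixes A :: "('m::{t2_space,second_countable_topology}, 'n::finite) chart set"
    and k :: nat
    and U :: "'i \<Rightarrow> 'm set"
    and w :: "'i \<Rightarrow> ('m,'n) chart \<Rightarrow> 'm \<Rightarrow> complex^'n"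
    and X :: "('m,'n) chart \<Rightarrow> 'm \<Rightarrow> complex^'n"
  assumes "complex_manifold A"
    and "CARD('n) = 2 * k + 1" and "k \<ge> 1"
    and "singular_contact_form k A U w"
    and "first_type A U w"
    and "structurally_smooth k A U w"
    and "holo_vfield A X"
    and "inf_contact_transf A U w X"
  shows "tangent_to_martinet k A U w X"
  unfolding tangent_to_martinet_def
proof (intro allI ballI)
  fix i c p
  assume cA: "c \<in> A" and p: "p \<in> martinet k A U w \<inter> U i \<inter> fst c"
  have atlas: "holo_atlas A" using assms(1) by (simp add: complex_manifold_def)
  have inj: "inj_on (snd c) (fst c)" by (rule chart_inj[OF atlas cA])
  have scf: "singular_contact_form k A U w" by fact
  obtain j where pj: "p \<in> vanishing_set k A (U j) (w j)" using p unfolding martinet_def by blast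
  then have pUj: "p \<in> U j" and vanj: "contact_top k (loc c (w j c)) (snd c p) = (\<lambda>v. 0)"
    using cA p unfolding vanishing_set_def by auto
  have pUi: "p \<in> U i" and pc: "p \<in> fst c" using p by auto
  define Q1 where "Q1 = snd c ` (U i \<inter> fst c)"
  define Q2 where "Q2 = snd c ` ((U i \<inter> U j) \<inter> fst c)"
  have hai: "holo_map_on Q1 (loc c (w i c))"
    using scf cA unfolding singular_contact_form_def holo_1form_def Q1_def by blast
  have haj: "holo_map_on (snd c ` (U j \<inter> fst c)) (loc c (w j c))"
    using scf cA unfolding singular_contact_form_def holo_1form_def by blast
  obtain f where f: "mholo_fun A (U i \<inter> U j) f" "\<And>c p. c \<in> A \<Longrightarrow> p \<in> U i \<inter> U j \<inter> fst c \<Longrightarrow> w i c p = f p *s w j c p"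
    using scf unfolding singular_contact_form_def by blast
  have hf: "holo_fun_on Q2 (loc c f)" using f(1) cA unfolding mholo_fun_def Q2_def by blast
  have oQ2: "open Q2" by (rule holo_fun_on_open[OF hf])
  have x2: "snd c p \<in> Q2" using pUi pUj pc by (simp add: Q2_def)
  have vani: "contact_top k (loc c (w i c)) (snd c p) = (\<lambda>v. 0)"
  proof (rule scaling[OF _ _ hf x2 _ vanj])
    show "holo_map_on Q2 (loc c (w i c))" by (rule holo_map_on_subset[OF hai oQ2]) (auto simp: Q1_def Q2_def)
    show "holo_map_on Q2 (loc c (w j c))" by (rule holo_map_on_subset[OF haj oQ2]) (auto simp: Q2_def)
    fix y assume "y \<in> Q2"
    then obtain p' where p': "p' \<in> U i \<inter> U j \<inter> fst c" "y = snd c p'" by (auto simp: Q2_def)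
    show "loc c (w i c) y = loc c f y *s loc c (w j c) y"
    proof -
      have "p' \<in> fst c" using p'(1) by simp
      then show ?thesis using p' f(2)[OF cA p'(1)] by (simp add: loc_at[OF inj])
    qed
  qed
  obtain hfun where hfun: "mholo_fun A (U i) hfun" "\<And>c p v. c \<in> A \<Longrightarrow> p \<in> U i \<inter> fst c \<Longrightarrow>
        lie_1form (loc c (X c)) (loc c (w i c)) (snd c p) v = hfun p * cpair (w i c p) v"
    using assms(8) unfolding inf_contact_transf_def by blast
  have hh: "holo_fun_on Q1 (loc c hfun)" using hfun(1) cA unfolding mholo_fun_def Q1_def by blast
  have oQ1: "open Q1" by (rule holo_fun_on_open[OF hh])
  have hX: "holo_map_on Q1 (loc c (X c))"
  proof (rule holo_map_on_subset[OF _ oQ1])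
    show "holo_map_on (snd c ` fst c) (loc c (X c))" using assms(7) cA unfolding holo_vfield_def by blast
  qed (auto simp: Q1_def)
  have x1: "snd c p \<in> Q1" using pUi pc by (simp add: Q1_def)
  have "frechet_derivative (contact_H k (loc c (w i c))) (at (snd c p)) (loc c (X c) (snd c p)) = 0"
  proof (rule local_main[OF hai hX hh x1 _ vani])
    fix y v assume "y \<in> Q1"
    then obtain p' where p': "p' \<in> U i \<inter> fst c" "y = snd c p'" by (auto simp: Q1_def)
    show "lie_1form (loc c (X c)) (loc c (w i c)) y v = loc c hfun y * cpair (loc c (w i c) y) v"
    proof -
      have "p' \<in> fst c" using p'(1) by simp
      then show ?thesis using p' hfun(2)[OF cA p'(1)] by (simp add: loc_at[OF inj])
    qed
  qed
  then show "frechet_derivative (Hloc k (w i) c) (at (snd c p)) (X c p) = 0"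
    by (simp add: Hloc_def loc_at[OF inj pc])
qed


end
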